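(* Let $f:\mathbb{R}^d\to\mathbb{R}$ be differentiable with $L$-Lipschitz gradient ($L>0$) and bounded below, and let $f^*=\inf f>-\infty$. Consider parallel-step SGD iterations with $p$ processors (as defined in the context) with constant learning rate $\alpha=\sqrt{p}/\sqrt{T}$, where $T\ge 64L^2p$ is the number of iterations, and assume they satisfy elastic consistency with constant $B$. Then $$\min_{t\in\{0,\dots,T-1\}}\mathbb{E}\|\nabla f(\vec x_t)\|^2\le \frac{8(f(\vec x_0)-f^* )}{\sqrt{Tp}}+\frac{4B^2L^2p}{T}+\frac{8L\sigma^2}{\sqrt{Tp}}+\frac{16L^3B^2p\sqrt p}{T\sqrt T}.$$
   Context: All random objects live on a probability space with a filtration $(\mathcal F_t)_{t\ge0}$. Parallel-step SGD iterations with $p$ processors: $\vec x_0\in\mathbb{R}^d$ is deterministic. For each iteration $t\ge0$ a set $I_t\subseteq\{1,\dots,p\}$ with $p/2\le|I_t|\le p$ is given (fixed independently of the algorithm's randomness). Each processor $i\in I_t$ holds a view $\vec v_t^i$; $\vec x_t$ and all $\vec v_t^i$ are $\mathcal F_t$-measurable. Each $i\in I_t$ computes a stochastic gradient $\tilde G(\vec v_t^i)$ ($\mathcal F_{t+1}$-measurable); conditionally on $\mathcal F_t$ these are independent across $i\in I_t$, with $\mathbb{E}[\tilde G(\vec v_t^i)\mid\mathcal F_t]=\nabla f(\vec v_t^i)$ and $\mathbb{E}[\|\tilde G(\vec v_t^i)-\nabla f(\vec v_t^i)\|^2\mid\mathcal F_t]\le\sigma^2$. The global parameter is updated by $\vec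 x_{t+1}=\vec x_t-\frac{\alpha}{p}\sum_{i\in I_t}\tilde G(\vec v_t^i)$. Elastic consistency with constant $B>0$ (independent of $t$) means $\mathbb{E}\|\vec x_t-\vec v_t^i\|^2\le\alpha^2B^2$ for all $t$ and all $i\in I_t$. *)

theory Defs
  imports "HOL-Probability.Probability"
begin

text \<open>Taking A i = UNIV for some indices covers all subfamilies.\<close>
definition cond_indep_vars ::
  "'a measure \<Rightarrow> 'a measure \<Rightarrow> ('i \<Rightarrow> 'a \<Rightarrow> 'b::topological_space) \<Rightarrow> 'i set \<Rightarrow> bool" where
  "cond_indep_vars M F X J \<longleftrightarrow>
     (\<forall>A. (\<forall>i\<in>J. A i \<in> sets borel) \<longrightarrow>
        (AE \<omega> in M. real_cond_exp M F (indicator (\<Inter>i\<in>J. X i -` A i \<inter> space M)) \<omega>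
           = (\<Prod>i\<in>J. real_cond_exp M F (indicator (X i -` A i \<inter> space M)) \<omega>)))"

end

theory Submission
  imports Defs
begin

lemma descent:
  fixes f :: "'v::euclidean_space \<Rightarrow> real" and grad :: "'v \<Rightarrow> 'v"
  assumes grad_f: "\<And>y. (f has_derivative (\<lambda>h. grad y \<bullet> h)) (at y)"
    and lip: "\<And>y z. norm (grad y - grad z) \<le> L * norm (y - z)"
    and L0: "L \<ge> 0"
  shows "f y \<le> f x + grad x \<bullet> (y - x) + L * (norm (y - x))\<^sup>2"
proof -
  define d where "d = y - x"
  have der: "((\<lambda>s. f (x + s *\<^sub>R d)) has_derivative (\<lambda>h. grad (x + s *\<^sub>R d) \<bullet> (h *\<^sub>R d))) (at s within {0..1})" for s
  proof -
    have "((\<lambda>s. x + s *\<^sub>R d) has_derivative (\<lambda>h. h *\<^sub>R d)) (at s within {0..1})"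
      by (auto intro!: derivative_eq_intros)
    from has_derivative_compose[OF this grad_f] show ?thesis by simp
  qed
  obtain s where s: "s \<in> {0..1}" and eq: "f (x + 1 *\<^sub>R d) - f (x + 0 *\<^sub>R d) = grad (x + s *\<^sub>R d) \<bullet> ((1 - 0) *\<^sub>R d)"
    using mvt_very_simple[of 0 1 "\<lambda>s. f (x + s *\<^sub>R d)", OF _ der] by auto
  have "(grad (x + s *\<^sub>R d) - grad x) \<bullet> d \<le> norm (grad (x + s *\<^sub>R d) - grad x) * norm d"
    by (rule norm_cauchy_schwarz)
  also have "\<dots> \<le> L * norm (s *\<^sub>R d) * norm d"
    using lip[of "x + s *\<^sub>R d" x] by (simp add: mult_right_mono)
  also have "\<dots> \<le> L * norm d * norm d"
  proof -
    have "norm (s *\<^sub>R d) \<le> norm d" using s by (simp add: mult_left_le_one_le)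
    then show ?thesis using L0 by (intro mult_right_mono mult_left_mono) auto
  qed
  finally have "(grad (x + s *\<^sub>R d) - grad x) \<bullet> d \<le> L * (norm d)\<^sup>2"
    by (simp add: power2_eq_square mult.assoc)
  then show ?thesis using eq unfolding d_def by (simp add: inner_diff_left algebra_simps)
qed

lemma sfs_of_prob:
  assumes "prob_space M" "subalgebra M F"
  shows "sigma_finite_subalgebra M F"
proof -
  interpret prob_space M by fact
  have "finite_measure_subalgebra M F"
    unfolding finite_measure_subalgebra_def finite_measure_subalgebra_axioms_def
    using assms(2) finite_measure_axioms by auto
  then show ?thesis by (rule finite_measure_subalgebra_is_sigma_finite)
qed

lemma ext_borel:
  fixes Y :: "'a \<Rightarrow> 'v::euclidean_space" and a b :: "'a \<Rightarrow> ennreal"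
  assumes Y[measurable]: "Y \<in> borel_measurable M" and a[measurable]: "a \<in> borel_measurable M"
    and b[measurable]: "b \<in> borel_measurable M"
    and base: "\<And>A. A \<in> sets borel \<Longrightarrow> (\<integral>\<^sup>+\<omega>. indicator A (Y \<omega>) * a \<omega> \<partial>M) = (\<integral>\<^sup>+\<omega>. indicator A (Y \<omega>) * b \<omega> \<partial>M)"
    and u: "u \<in> borel_measurable borel"
  shows "(\<integral>\<^sup>+\<omega>. u (Y \<omega>) * a \<omega> \<partial>M) = (\<integral>\<^sup>+\<omega>. u (Y \<omega>) * b \<omega> \<partial>M)"
  using u
proof (induction rule: borel_measurable_induct)
  case (cong f g)
  then have "f = g" by auto
  then show ?case using cong by simp
next
  case (set A)
  then show ?case using base by simp
next
  case (mult u c)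
  have [measurable]: "u \<in> borel_measurable borel" using mult by auto
  have "(\<integral>\<^sup>+\<omega>. c * u (Y \<omega>) * a \<omega> \<partial>M) = c * (\<integral>\<^sup>+\<omega>. u (Y \<omega>) * a \<omega> \<partial>M)"
    by (subst nn_integral_cmult[symmetric]) (auto simp: mult.assoc)
  moreover have "(\<integral>\<^sup>+\<omega>. c * u (Y \<omega>) * b \<omega> \<partial>M) = c * (\<integral>\<^sup>+\<omega>. u (Y \<omega>) * b \<omega> \<partial>M)"
    by (subst nn_integral_cmult[symmetric]) (auto simp: mult.assoc)
  ultimately show ?case using mult by simp
next
  case (add u v)
  have [measurable]: "u \<in> borel_measurable borel" "v \<in> borel_measurable borel" using add by auto
  have "(\<integral>\<^sup>+\<omega>. (v (Y \<omega>) + u (Y \<omega>)) * a \<omega> \<partial>M) = (\<integral>\<^sup>+\<omega>. v (Y \<omega>) * a \<omega> \<partial>M) + (\<integral>\<^sup>+\<omega>. u (Y \<omega>) * a \<omega> \<partial>M)"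
    by (subst nn_integral_add[symmetric]) (auto simp: distrib_right)
  moreover have "(\<integral>\<^sup>+\<omega>. (v (Y \<omega>) + u (Y \<omega>)) * b \<omega> \<partial>M) = (\<integral>\<^sup>+\<omega>. v (Y \<omega>) * b \<omega> \<partial>M) + (\<integral>\<^sup>+\<omega>. u (Y \<omega>) * b \<omega> \<partial>M)"
    by (subst nn_integral_add[symmetric]) (auto simp: distrib_right)
  ultimately show ?case using add by simp
next
  case (seq U)
  have "incseq U" using seq by auto
  note [measurable] = seq(1)
  have gen: "(\<integral>\<^sup>+\<omega>. (SUP i. U i) (Y \<omega>) * c \<omega> \<partial>M) = (SUP i. \<integral>\<^sup>+\<omega>. U i (Y \<omega>) * c \<omega> \<partial>M)"
    if [measurable]: "c \<in> borel_measurable M" for c :: "'a \<Rightarrow> ennreal"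
  proof -
    have "(\<integral>\<^sup>+\<omega>. (SUP i. U i) (Y \<omega>) * c \<omega> \<partial>M) = (\<integral>\<^sup>+\<omega>. (SUP i. U i (Y \<omega>) * c \<omega>) \<partial>M)"
      by (simp add: SUP_mult_right_ennreal image_comp)
    also have "\<dots> = (SUP i. \<integral>\<^sup>+\<omega>. U i (Y \<omega>) * c \<omega> \<partial>M)"
    proof (rule nn_integral_monotone_convergence_SUP)
      show "incseq (\<lambda>i \<omega>. U i (Y \<omega>) * c \<omega>)"
        using \<open>incseq U\<close> by (auto simp: incseq_def le_fun_def intro!: mult_right_mono)
    qed simp
    finally show ?thesis .
  qed
  show ?case using seq by (simp only: gen a b)
qed

context sigma_finite_subalgebra
begin

lemma rce_nn:
  assumes "integrable M f" "\<And>\<omega>. f \<omega> \<ge> 0"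
  shows "AE \<omega> in M. ennreal (real_cond_exp M F f \<omega>) = nn_cond_exp M F (\<lambda>\<omega>. ennreal (f \<omega>)) \<omega>"
proof -
  have [measurable]: "f \<in> borel_measurable M" using assms(1) by auto
  have z: "(\<lambda>\<omega>. ennreal (- f \<omega>)) = (\<lambda>_. 0)" using assms(2) by (simp add: ennreal_neg)
  have "AE \<omega> in M. 0 = nn_cond_exp M F (\<lambda>_. 0) \<omega>"
    by (rule nn_cond_exp_F_meas) auto
  then have z2: "AE \<omega> in M. nn_cond_exp M F (\<lambda>\<omega>. ennreal (- f \<omega>)) \<omega> = 0" unfolding z by auto
  have "(\<integral>\<^sup>+\<omega>. nn_cond_exp M F (\<lambda>\<omega>. ennreal (f \<omega>)) \<omega> \<partial>M) = (\<integral>\<^sup>+\<omega>. 1 * nn_cond_exp M F (\<lambda>\<omega>. ennreal (f \<omega>)) \<omega> \<partial>M)"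
    by simp
  also have "\<dots> = (\<integral>\<^sup>+\<omega>. 1 * ennreal (f \<omega>) \<partial>M)"
    by (rule nn_cond_exp_intg) auto
  also have "\<dots> < \<infinity>" using assms(1) by (simp add: integrable_iff_bounded assms(2))
  finally have "AE \<omega> in M. nn_cond_exp M F (\<lambda>\<omega>. ennreal (f \<omega>)) \<omega> \<noteq> \<infinity>"
    by (intro nn_integral_PInf_AE) auto
  with z2 show ?thesis
    by eventually_elim (simp add: real_cond_exp_def ennreal_enn2real_if)
qed

end

lemma indep_base:
  fixes X :: "'i \<Rightarrow> 'a \<Rightarrow> 'v::euclidean_space"
  assumes prob: "prob_space M" and sub: "subalgebra M F" and ci: "cond_indep_vars M F X J"
    and fin: "finite J" and ij: "i \<in> J" "j \<in> J" "i \<noteq> j"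
    and Xi[measurable]: "X i \<in> borel_measurable M" and Xj[measurable]: "X j \<in> borel_measurable M"
    and A[measurable]: "A \<in> sets borel" and A'[measurable]: "A' \<in> sets borel"
  shows "(\<integral>\<^sup>+\<omega>. indicator A (X i \<omega>) * indicator A' (X j \<omega>) \<partial>M)
    = (\<integral>\<^sup>+\<omega>. nn_cond_exp M F (\<lambda>\<omega>. indicator A (X i \<omega>)) \<omega> * nn_cond_exp M F (\<lambda>\<omega>. indicator A' (X j \<omega>)) \<omega> \<partial>M)"
proof -
  interpret sigma_finite_subalgebra M F by (rule sfs_of_prob[OF prob sub])
  interpret P: prob_space M by (rule prob)
  define Ei where "Ei = X i -` A \<inter> space M"
  define Ej where "Ej = X j -` A' \<inter> space M"
  have [measurable]: "Ei \<in> sets M" "Ej \<in> sets M" unfolding Ei_def Ej_def by measurable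
  define AA where "AA = (\<lambda>k. if k = i then A else if k = j then A' else UNIV)"
  have "\<forall>k\<in>J. AA k \<in> sets borel" unfolding AA_def by auto
  with ci have H: "AE \<omega> in M. real_cond_exp M F (indicator (\<Inter>k\<in>J. X k -` AA k \<inter> space M)) \<omega>
           = (\<Prod>k\<in>J. real_cond_exp M F (indicator (X k -` AA k \<inter> space M)) \<omega>)"
    unfolding cond_indep_vars_def by blast
  have inter: "(\<Inter>k\<in>J. X k -` AA k \<inter> space M) = Ei \<inter> Ej"
    using ij unfolding AA_def Ei_def Ej_def by auto
  have prodeq: "(\<Prod>k\<in>J. real_cond_exp M F (indicator (X k -` AA k \<inter> space M)) \<omega>)
     = real_cond_exp M F (indicator Ei) \<omega> * real_cond_exp M F (indicator Ej) \<omega>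
       * (\<Prod>k\<in>J-{i,j}. real_cond_exp M F (indicator (space M)) \<omega>)" for \<omega>
  proof -
    have J1: "J = insert i (J - {i})" using ij by auto
    have J2: "J - {i} = insert j (J - {i,j})" using ij by auto
    have "(\<Prod>k\<in>J. real_cond_exp M F (indicator (X k -` AA k \<inter> space M)) \<omega>)
      = real_cond_exp M F (indicator (X i -` AA i \<inter> space M)) \<omega> *
        (real_cond_exp M F (indicator (X j -` AA j \<inter> space M)) \<omega> *
        (\<Prod>k\<in>J-{i,j}. real_cond_exp M F (indicator (X k -` AA k \<inter> space M)) \<omega>))"
      apply (subst J1, subst prod.insert, use fin in simp, simp)
      apply (subst J2, subst prod.insert, use fin in simp, simp)
      by (simp add: insert_commute)
    also have "(\<Prod>k\<in>J-{i,j}. real_cond_exp M F (indicator (X k -` AA k \<inter> space M)) \<omega>)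
        = (\<Prod>k\<in>J-{i,j}. real_cond_exp M F (indicator (space M)) \<omega>)"
      by (rule prod.cong) (auto simp: AA_def)
    finally show ?thesis using ij by (simp add: AA_def Ei_def Ej_def mult.assoc)
  qed
  have sF: "space F = space M" using sub by (simp add: subalgebra_def)
  have indint: "integrable M (indicator E :: 'a \<Rightarrow> real)" if "E \<in> sets M" for E
    using that by (simp add: integrable_indicator_iff P.emeasure_finite less_top[symmetric])
  have "indicator (space M) \<in> (borel_measurable F :: ('a \<Rightarrow> real) set)"
    unfolding sF[symmetric] by (rule borel_measurable_indicator) simp
  then have "AE \<omega> in M. real_cond_exp M F (indicator (space M)) \<omega> = indicator (space M) \<omega>"
    by (intro real_cond_exp_F_meas indint) auto
  then have one: "AE \<omega> in M. real_cond_exp M F (indicator (space M)) \<omega> = (1::real)"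
    by (rule AE_mp) (rule AE_I2, simp)
  have nn: "AE \<omega> in M. ennreal (real_cond_exp M F (indicator E) \<omega>) = nn_cond_exp M F (indicator E) \<omega>"
    if [measurable]: "E \<in> sets M" for E
  proof -
    have "AE \<omega> in M. ennreal (real_cond_exp M F (indicator E) \<omega>) = nn_cond_exp M F (\<lambda>\<omega>. ennreal (indicator E \<omega>)) \<omega>"
      by (rule rce_nn) (auto intro: indint[OF that])
    then show ?thesis by (simp add: ennreal_indicator)
  qed
  have pos: "AE \<omega> in M. real_cond_exp M F (indicator E) \<omega> \<ge> 0" if [measurable]: "E \<in> sets M" for E
    by (rule real_cond_exp_pos) auto
  have cgi: "AE \<omega> in M. nn_cond_exp M F (indicator Ei) \<omega> = nn_cond_exp M F (\<lambda>\<omega>. indicator A (X i \<omega>)) \<omega>"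
    by (rule nn_cond_exp_cong) (auto simp: Ei_def split: split_indicator)
  have cgj: "AE \<omega> in M. nn_cond_exp M F (indicator Ej) \<omega> = nn_cond_exp M F (\<lambda>\<omega>. indicator A' (X j \<omega>)) \<omega>"
    by (rule nn_cond_exp_cong) (auto simp: Ej_def split: split_indicator)
  have mij: "Ei \<inter> Ej \<in> sets M" and mi: "Ei \<in> sets M" and mj: "Ej \<in> sets M" by auto
  have "(\<integral>\<^sup>+\<omega>. indicator A (X i \<omega>) * indicator A' (X j \<omega>) \<partial>M) = (\<integral>\<^sup>+\<omega>. 1 * indicator (Ei \<inter> Ej) \<omega> \<partial>M)"
    by (rule nn_integral_cong) (auto simp: Ei_def Ej_def split: split_indicator)
  also have "\<dots> = (\<integral>\<^sup>+\<omega>. 1 * nn_cond_exp M F (indicator (Ei \<inter> Ej)) \<omega> \<partial>M)"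
    by (rule nn_cond_exp_intg[symmetric]) auto
  also have "\<dots> = (\<integral>\<^sup>+\<omega>. nn_cond_exp M F (\<lambda>\<omega>. indicator A (X i \<omega>)) \<omega> * nn_cond_exp M F (\<lambda>\<omega>. indicator A' (X j \<omega>)) \<omega> \<partial>M)"
  proof (rule nn_integral_cong_AE)
    show "AE \<omega> in M. 1 * nn_cond_exp M F (indicator (Ei \<inter> Ej)) \<omega> = nn_cond_exp M F (\<lambda>\<omega>. indicator A (X i \<omega>)) \<omega> * nn_cond_exp M F (\<lambda>\<omega>. indicator A' (X j \<omega>)) \<omega>"
      using H one nn[OF mij] nn[OF mi] nn[OF mj] pos[OF mi] pos[OF mj] cgi cgj
    proof eventually_elim
      case (elim \<omega>)
      have e1: "real_cond_exp M F (indicator (Ei \<inter> Ej)) \<omega> = real_cond_exp M F (indicator Ei) \<omega> * real_cond_exp M F (indicator Ej) \<omega>"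
        using elim(1) elim(2) unfolding inter prodeq by simp
      show ?case
        by (simp add: e1 ennreal_mult elim(6,7) flip: elim(3,4,5) elim(8,9))
    qed
  qed
  finally show ?thesis .
qed

lemma indep_nn:
  fixes X :: "'i \<Rightarrow> 'a \<Rightarrow> 'v::euclidean_space" and u w :: "'v \<Rightarrow> ennreal"
  assumes prob: "prob_space M" and sub: "subalgebra M F" and ci: "cond_indep_vars M F X J"
    and fin: "finite J" and ij: "i \<in> J" "j \<in> J" "i \<noteq> j"
    and Xi[measurable]: "X i \<in> borel_measurable M" and Xj[measurable]: "X j \<in> borel_measurable M"
    and u[measurable]: "u \<in> borel_measurable borel" and w[measurable]: "w \<in> borel_measurable borel"
  shows "(\<integral>\<^sup>+\<omega>. u (X i \<omega>) * w (X j \<omega>) \<partial>M) = (\<integral>\<^sup>+\<omega>. u (X i \<omega>) * nn_cond_exp M F (\<lambda>\<omega>. w (X j \<omega>)) \<omega> \<partial>M)"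
proof -
  interpret sigma_finite_subalgebra M F by (rule sfs_of_prob[OF prob sub])
  have stepA: "(\<integral>\<^sup>+\<omega>. w' (X j \<omega>) * indicator A (X i \<omega>) \<partial>M)
      = (\<integral>\<^sup>+\<omega>. w' (X j \<omega>) * nn_cond_exp M F (\<lambda>\<omega>. indicator A (X i \<omega>)) \<omega> \<partial>M)"
    if [measurable]: "A \<in> sets borel" and w'[measurable]: "w' \<in> borel_measurable borel" for A and w' :: "'v \<Rightarrow> ennreal"
  proof (rule ext_borel[OF Xj _ _ _ w'])
    fix A' :: "'v set" assume [measurable]: "A' \<in> sets borel"
    have "(\<integral>\<^sup>+\<omega>. indicator A' (X j \<omega>) * indicator A (X i \<omega>) \<partial>M)
        = (\<integral>\<^sup>+\<omega>. indicator A (X i \<omega>) * indicator A' (X j \<omega>) \<partial>M)" by (simp add: mult.commute)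
    also have "\<dots> = (\<integral>\<^sup>+\<omega>. nn_cond_exp M F (\<lambda>\<omega>. indicator A (X i \<omega>)) \<omega> * nn_cond_exp M F (\<lambda>\<omega>. indicator A' (X j \<omega>)) \<omega> \<partial>M)"
      by (rule indep_base[OF prob sub ci fin ij Xi Xj]) auto
    also have "\<dots> = (\<integral>\<^sup>+\<omega>. nn_cond_exp M F (\<lambda>\<omega>. indicator A (X i \<omega>)) \<omega> * indicator A' (X j \<omega>) \<partial>M)"
      by (rule nn_cond_exp_intg) auto
    also have "\<dots> = (\<integral>\<^sup>+\<omega>. indicator A' (X j \<omega>) * nn_cond_exp M F (\<lambda>\<omega>. indicator A (X i \<omega>)) \<omega> \<partial>M)"
      by (simp add: mult.commute)
    finally show "(\<integral>\<^sup>+\<omega>. indicator A' (X j \<omega>) * indicator A (X i \<omega>) \<partial>M)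
        = (\<integral>\<^sup>+\<omega>. indicator A' (X j \<omega>) * nn_cond_exp M F (\<lambda>\<omega>. indicator A (X i \<omega>)) \<omega> \<partial>M)" .
  qed auto
  show ?thesis
  proof (rule ext_borel[OF Xi _ _ _ u])
    fix A :: "'v set" assume [measurable]: "A \<in> sets borel"
    have "(\<integral>\<^sup>+\<omega>. indicator A (X i \<omega>) * w (X j \<omega>) \<partial>M)
        = (\<integral>\<^sup>+\<omega>. w (X j \<omega>) * indicator A (X i \<omega>) \<partial>M)" by (simp add: mult.commute)
    also have "\<dots> = (\<integral>\<^sup>+\<omega>. w (X j \<omega>) * nn_cond_exp M F (\<lambda>\<omega>. indicator A (X i \<omega>)) \<omega> \<partial>M)"
      by (rule stepA) auto
    also have "\<dots> = (\<integral>\<^sup>+\<omega>. nn_cond_exp M F (\<lambda>\<omega>. indicator A (X i \<omega>)) \<omega> * w (X j \<omega>) \<partial>M)"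
      by (simp add: mult.commute)
    also have "\<dots> = (\<integral>\<^sup>+\<omega>. nn_cond_exp M F (\<lambda>\<omega>. indicator A (X i \<omega>)) \<omega> * nn_cond_exp M F (\<lambda>\<omega>. w (X j \<omega>)) \<omega> \<partial>M)"
      by (rule nn_cond_exp_intg[symmetric]) auto
    also have "\<dots> = (\<integral>\<^sup>+\<omega>. nn_cond_exp M F (\<lambda>\<omega>. w (X j \<omega>)) \<omega> * nn_cond_exp M F (\<lambda>\<omega>. indicator A (X i \<omega>)) \<omega> \<partial>M)"
      by (simp add: mult.commute)
    also have "\<dots> = (\<integral>\<^sup>+\<omega>. nn_cond_exp M F (\<lambda>\<omega>. w (X j \<omega>)) \<omega> * indicator A (X i \<omega>) \<partial>M)"
      by (rule nn_cond_exp_intg) auto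
    also have "\<dots> = (\<integral>\<^sup>+\<omega>. indicator A (X i \<omega>) * nn_cond_exp M F (\<lambda>\<omega>. w (X j \<omega>)) \<omega> \<partial>M)"
      by (simp add: mult.commute)
    finally show "(\<integral>\<^sup>+\<omega>. indicator A (X i \<omega>) * w (X j \<omega>) \<partial>M)
        = (\<integral>\<^sup>+\<omega>. indicator A (X i \<omega>) * nn_cond_exp M F (\<lambda>\<omega>. w (X j \<omega>)) \<omega> \<partial>M)" .
  qed auto
qed

lemma enn2real_mult_fin:
  fixes x y :: ennreal
  assumes "x * y \<noteq> \<top>"
  shows "ennreal (enn2real x * enn2real y) = x * y"
proof (cases "x = \<top> \<or> y = \<top>")
  case True
  then have "x = 0 \<or> y = 0" using assms by (auto simp: ennreal_mult_eq_top_iff)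
  then show ?thesis using True by auto
next
  case False
  then show ?thesis by (simp add: ennreal_mult'' ennreal_enn2real_if)
qed

lemma prod_enn:
  fixes a b :: "'a \<Rightarrow> ennreal"
  assumes [measurable]: "a \<in> borel_measurable M" "b \<in> borel_measurable M"
    and fin: "(\<integral>\<^sup>+\<omega>. a \<omega> * b \<omega> \<partial>M) < \<infinity>"
  shows "integrable M (\<lambda>\<omega>. enn2real (a \<omega>) * enn2real (b \<omega>))"
    "(\<integral>\<omega>. enn2real (a \<omega>) * enn2real (b \<omega>) \<partial>M) = enn2real (\<integral>\<^sup>+\<omega>. a \<omega> * b \<omega> \<partial>M)"
proof -
  have "AE \<omega> in M. a \<omega> * b \<omega> \<noteq> \<infinity>"
    using fin by (intro nn_integral_PInf_AE) auto
  then have ae: "AE \<omega> in M. ennreal (enn2real (a \<omega>) * enn2real (b \<omega>)) = a \<omega> * b \<omega>"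
    by eventually_elim (simp add: enn2real_mult_fin)
  have eq: "(\<integral>\<^sup>+\<omega>. ennreal (enn2real (a \<omega>) * enn2real (b \<omega>)) \<partial>M) = (\<integral>\<^sup>+\<omega>. a \<omega> * b \<omega> \<partial>M)"
    by (rule nn_integral_cong_AE[OF ae])
  show "integrable M (\<lambda>\<omega>. enn2real (a \<omega>) * enn2real (b \<omega>))"
    by (rule integrableI_bounded) (use eq fin in auto)
  show "(\<integral>\<omega>. enn2real (a \<omega>) * enn2real (b \<omega>) \<partial>M) = enn2real (\<integral>\<^sup>+\<omega>. a \<omega> * b \<omega> \<partial>M)"
    by (subst integral_eq_nn_integral) (auto simp: eq)
qed

lemma ennreal_mult_le_abs: "ennreal x * ennreal y \<le> ennreal \<bar>x * y\<bar>"
proof (cases "x \<ge> 0 \<and> y \<ge> 0")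
  case True then show ?thesis by (simp add: ennreal_mult[symmetric] abs_mult)
next
  case False
  then have "ennreal x = 0 \<or> ennreal y = 0" by (auto simp: ennreal_neg)
  then show ?thesis by auto
qed

lemma indep_real:
  fixes X :: "'i \<Rightarrow> 'a \<Rightarrow> 'v::euclidean_space" and \<phi> \<psi> :: "'v \<Rightarrow> real"
  assumes prob: "prob_space M" and sub: "subalgebra M F" and ci: "cond_indep_vars M F X J"
    and fin: "finite J" and ij: "i \<in> J" "j \<in> J" "i \<noteq> j"
    and Xi[measurable]: "X i \<in> borel_measurable M" and Xj[measurable]: "X j \<in> borel_measurable M"
    and phi[measurable]: "\<phi> \<in> borel_measurable borel" and psi[measurable]: "\<psi> \<in> borel_measurable borel"
    and int: "integrable M (\<lambda>\<omega>. \<phi> (X i \<omega>) * \<psi> (X j \<omega>))"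
  shows "integrable M (\<lambda>\<omega>. real_cond_exp M F (\<lambda>\<omega>. \<phi> (X i \<omega>)) \<omega> * real_cond_exp M F (\<lambda>\<omega>. \<psi> (X j \<omega>)) \<omega>)"
    "(\<integral>\<omega>. \<phi> (X i \<omega>) * \<psi> (X j \<omega>) \<partial>M)
      = (\<integral>\<omega>. real_cond_exp M F (\<lambda>\<omega>. \<phi> (X i \<omega>)) \<omega> * real_cond_exp M F (\<lambda>\<omega>. \<psi> (X j \<omega>)) \<omega> \<partial>M)"
proof -
  interpret sigma_finite_subalgebra M F by (rule sfs_of_prob[OF prob sub])
  let ?N = "nn_cond_exp M F"
  have fin_abs: "(\<integral>\<^sup>+\<omega>. ennreal \<bar>\<phi> (X i \<omega>) * \<psi> (X j \<omega>)\<bar> \<partial>M) < \<infinity>"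
    using int by (simp add: integrable_iff_bounded)
  have pair: "integrable M (\<lambda>\<omega>. enn2real (s (X i \<omega>)) * enn2real (r (X j \<omega>)))
     \<and> integrable M (\<lambda>\<omega>. enn2real (?N (\<lambda>\<omega>. s (X i \<omega>)) \<omega>) * enn2real (?N (\<lambda>\<omega>. r (X j \<omega>)) \<omega>))
     \<and> (\<integral>\<omega>. enn2real (s (X i \<omega>)) * enn2real (r (X j \<omega>)) \<partial>M)
       = (\<integral>\<omega>. enn2real (?N (\<lambda>\<omega>. s (X i \<omega>)) \<omega>) * enn2real (?N (\<lambda>\<omega>. r (X j \<omega>)) \<omega>) \<partial>M)"
    if [measurable]: "s \<in> borel_measurable borel" "r \<in> borel_measurable borel"
      and f: "(\<integral>\<^sup>+\<omega>. s (X i \<omega>) * r (X j \<omega>) \<partial>M) < \<infinity>" for s r :: "'v \<Rightarrow> ennreal"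
  proof -
    have "(\<integral>\<^sup>+\<omega>. s (X i \<omega>) * r (X j \<omega>) \<partial>M) = (\<integral>\<^sup>+\<omega>. s (X i \<omega>) * ?N (\<lambda>\<omega>. r (X j \<omega>)) \<omega> \<partial>M)"
      by (rule indep_nn[OF prob sub ci fin ij Xi Xj]) auto
    also have "\<dots> = (\<integral>\<^sup>+\<omega>. ?N (\<lambda>\<omega>. r (X j \<omega>)) \<omega> * s (X i \<omega>) \<partial>M)" by (simp add: mult.commute)
    also have "\<dots> = (\<integral>\<^sup>+\<omega>. ?N (\<lambda>\<omega>. r (X j \<omega>)) \<omega> * ?N (\<lambda>\<omega>. s (X i \<omega>)) \<omega> \<partial>M)"
      by (rule nn_cond_exp_intg[symmetric]) auto
    also have "\<dots> = (\<integral>\<^sup>+\<omega>. ?N (\<lambda>\<omega>. s (X i \<omega>)) \<omega> * ?N (\<lambda>\<omega>. r (X j \<omega>)) \<omega> \<partial>M)" by (simp add: mult.commute)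
    finally have eq: "(\<integral>\<^sup>+\<omega>. s (X i \<omega>) * r (X j \<omega>) \<partial>M) = (\<integral>\<^sup>+\<omega>. ?N (\<lambda>\<omega>. s (X i \<omega>)) \<omega> * ?N (\<lambda>\<omega>. r (X j \<omega>)) \<omega> \<partial>M)" .
    have f2: "(\<integral>\<^sup>+\<omega>. ?N (\<lambda>\<omega>. s (X i \<omega>)) \<omega> * ?N (\<lambda>\<omega>. r (X j \<omega>)) \<omega> \<partial>M) < \<infinity>" using f eq by simp
    show ?thesis
      using prod_enn[of "\<lambda>\<omega>. s (X i \<omega>)" M "\<lambda>\<omega>. r (X j \<omega>)", OF _ _ f]
        prod_enn[of "?N (\<lambda>\<omega>. s (X i \<omega>))" M "?N (\<lambda>\<omega>. r (X j \<omega>))", OF _ _ f2] eq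
      by auto
  qed
  have finpr: "(\<integral>\<^sup>+\<omega>. ennreal (a * \<phi> (X i \<omega>)) * ennreal (b * \<psi> (X j \<omega>)) \<partial>M) < \<infinity>"
    if "\<bar>a\<bar> = 1" "\<bar>b\<bar> = 1" for a b :: real
  proof -
    have "(\<integral>\<^sup>+\<omega>. ennreal (a * \<phi> (X i \<omega>)) * ennreal (b * \<psi> (X j \<omega>)) \<partial>M)
        \<le> (\<integral>\<^sup>+\<omega>. ennreal \<bar>\<phi> (X i \<omega>) * \<psi> (X j \<omega>)\<bar> \<partial>M)"
      by (rule nn_integral_mono, rule order_trans[OF ennreal_mult_le_abs]) (use that in \<open>simp add: abs_mult\<close>)
    then show ?thesis using fin_abs by (simp add: le_less_trans)
  qed
  define S where "S = (\<lambda>(a::real) (z::'v). ennreal (a * \<phi> z))"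
  define R where "R = (\<lambda>(b::real) (z::'v). ennreal (b * \<psi> z))"
  have SR: "integrable M (\<lambda>\<omega>. enn2real (S a (X i \<omega>)) * enn2real (R b (X j \<omega>)))
     \<and> integrable M (\<lambda>\<omega>. enn2real (?N (\<lambda>\<omega>. S a (X i \<omega>)) \<omega>) * enn2real (?N (\<lambda>\<omega>. R b (X j \<omega>)) \<omega>))
     \<and> (\<integral>\<omega>. enn2real (S a (X i \<omega>)) * enn2real (R b (X j \<omega>)) \<partial>M)
       = (\<integral>\<omega>. enn2real (?N (\<lambda>\<omega>. S a (X i \<omega>)) \<omega>) * enn2real (?N (\<lambda>\<omega>. R b (X j \<omega>)) \<omega>) \<partial>M)"
    if "\<bar>a\<bar> = 1" "\<bar>b\<bar> = 1" for a b
    by (rule pair) (use finpr[OF that] in \<open>auto simp: S_def R_def\<close>)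
  define pp where "pp = (\<lambda>\<omega>. enn2real (S 1 (X i \<omega>)) * enn2real (R 1 (X j \<omega>)))"
  define pm where "pm = (\<lambda>\<omega>. enn2real (S 1 (X i \<omega>)) * enn2real (R (-1) (X j \<omega>)))"
  define mp where "mp = (\<lambda>\<omega>. enn2real (S (-1) (X i \<omega>)) * enn2real (R 1 (X j \<omega>)))"
  define mm where "mm = (\<lambda>\<omega>. enn2real (S (-1) (X i \<omega>)) * enn2real (R (-1) (X j \<omega>)))"
  define PP where "PP = (\<lambda>\<omega>. enn2real (?N (\<lambda>\<omega>. S 1 (X i \<omega>)) \<omega>) * enn2real (?N (\<lambda>\<omega>. R 1 (X j \<omega>)) \<omega>))"
  define PM where "PM = (\<lambda>\<omega>. enn2real (?N (\<lambda>\<omega>. S 1 (X i \<omega>)) \<omega>) * enn2real (?N (\<lambda>\<omega>. R (-1) (X j \<omega>)) \<omega>))"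
  define MP where "MP = (\<lambda>\<omega>. enn2real (?N (\<lambda>\<omega>. S (-1) (X i \<omega>)) \<omega>) * enn2real (?N (\<lambda>\<omega>. R 1 (X j \<omega>)) \<omega>))"
  define MM where "MM = (\<lambda>\<omega>. enn2real (?N (\<lambda>\<omega>. S (-1) (X i \<omega>)) \<omega>) * enn2real (?N (\<lambda>\<omega>. R (-1) (X j \<omega>)) \<omega>))"
  have i1: "integrable M pp" "integrable M PP" "integral\<^sup>L M pp = integral\<^sup>L M PP"
    using SR[of 1 1] unfolding pp_def PP_def by auto
  have i2: "integrable M pm" "integrable M PM" "integral\<^sup>L M pm = integral\<^sup>L M PM"
    using SR[of 1 "-1"] unfolding pm_def PM_def by auto
  have i3: "integrable M mp" "integrable M MP" "integral\<^sup>L M mp = integral\<^sup>L M MP"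
    using SR[of "-1" 1] unfolding mp_def MP_def by auto
  have i4: "integrable M mm" "integrable M MM" "integral\<^sup>L M mm = integral\<^sup>L M MM"
    using SR[of "-1" "-1"] unfolding mm_def MM_def by auto
  have lhs: "(\<lambda>\<omega>. \<phi> (X i \<omega>) * \<psi> (X j \<omega>)) = (\<lambda>\<omega>. pp \<omega> - pm \<omega> - mp \<omega> + mm \<omega>)"
  proof
    fix \<omega>
    have a: "\<phi> (X i \<omega>) = enn2real (S 1 (X i \<omega>)) - enn2real (S (-1) (X i \<omega>))"
      unfolding S_def by (cases "\<phi> (X i \<omega>) \<ge> 0") (auto simp: ennreal_neg)
    have b: "\<psi> (X j \<omega>) = enn2real (R 1 (X j \<omega>)) - enn2real (R (-1) (X j \<omega>))"
      unfolding R_def by (cases "\<psi> (X j \<omega>) \<ge> 0") (auto simp: ennreal_neg)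
    show "\<phi> (X i \<omega>) * \<psi> (X j \<omega>) = pp \<omega> - pm \<omega> - mp \<omega> + mm \<omega>"
      unfolding pp_def pm_def mp_def mm_def by (subst a, subst b) (simp add: algebra_simps)
  qed
  have rhs: "(\<lambda>\<omega>. real_cond_exp M F (\<lambda>\<omega>. \<phi> (X i \<omega>)) \<omega> * real_cond_exp M F (\<lambda>\<omega>. \<psi> (X j \<omega>)) \<omega>)
      = (\<lambda>\<omega>. PP \<omega> - PM \<omega> - MP \<omega> + MM \<omega>)"
    unfolding PP_def PM_def MP_def MM_def real_cond_exp_def S_def R_def by (simp add: algebra_simps)
  show "integrable M (\<lambda>\<omega>. real_cond_exp M F (\<lambda>\<omega>. \<phi> (X i \<omega>)) \<omega> * real_cond_exp M F (\<lambda>\<omega>. \<psi> (X j \<omega>)) \<omega>)"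
    unfolding rhs using i1 i2 i3 i4 by auto
  show "(\<integral>\<omega>. \<phi> (X i \<omega>) * \<psi> (X j \<omega>) \<partial>M)
      = (\<integral>\<omega>. real_cond_exp M F (\<lambda>\<omega>. \<phi> (X i \<omega>)) \<omega> * real_cond_exp M F (\<lambda>\<omega>. \<psi> (X j \<omega>)) \<omega> \<partial>M)"
    unfolding rhs lhs using i1 i2 i3 i4 by simp
qed

lemma sq_sum_le: "(a + b)\<^sup>2 \<le> 2 * a\<^sup>2 + 2 * (b::real)\<^sup>2"
proof -
  have "0 \<le> (a - b)\<^sup>2" by simp
  then show ?thesis by (simp add: power2_eq_square algebra_simps)
qed

lemma ab_le: "0 \<le> a \<Longrightarrow> 0 \<le> b \<Longrightarrow> a * b \<le> a\<^sup>2 + (b::real)\<^sup>2"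
proof -
  assume "0 \<le> a" "0 \<le> b"
  then have "0 \<le> a * b" by simp
  moreover have "0 \<le> (a - b)\<^sup>2" by simp
  ultimately show ?thesis by (simp add: power2_eq_square algebra_simps)
qed

definition sqi :: "'a measure \<Rightarrow> ('a \<Rightarrow> 'v::euclidean_space) \<Rightarrow> bool" where
  "sqi M h \<longleftrightarrow> h \<in> borel_measurable M \<and> integrable M (\<lambda>\<omega>. (norm (h \<omega>))\<^sup>2)"

lemma sqiD: "sqi M h \<Longrightarrow> h \<in> borel_measurable M" "sqi M h \<Longrightarrow> integrable M (\<lambda>\<omega>. (norm (h \<omega>))\<^sup>2)"
  by (auto simp: sqi_def)

lemma sqi_bound:
  assumes "sqi M k" "h \<in> borel_measurable M" "\<And>\<omega>. \<omega> \<in> space M \<Longrightarrow> (norm (h \<omega>))\<^sup>2 \<le> c * (norm (k \<omega>))\<^sup>2"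
  shows "sqi M h"
  unfolding sqi_def
proof (intro conjI)
  show "h \<in> borel_measurable M" by fact
  have [measurable]: "k \<in> borel_measurable M" using assms(1) by (simp add: sqi_def)
  have "integrable M (\<lambda>\<omega>. \<bar>c\<bar> * (norm (k \<omega>))\<^sup>2)" using assms(1) by (simp add: sqi_def)
  then show "integrable M (\<lambda>\<omega>. (norm (h \<omega>))\<^sup>2)"
  proof (rule Bochner_Integration.integrable_bound)
    show "AE \<omega> in M. norm ((norm (h \<omega>))\<^sup>2) \<le> norm (\<bar>c\<bar> * (norm (k \<omega>))\<^sup>2)"
    proof (rule AE_I2)
      fix \<omega> assume "\<omega> \<in> space M"
      then have "(norm (h \<omega>))\<^sup>2 \<le> c * (norm (k \<omega>))\<^sup>2" by (rule assms(3))
      also have "\<dots> \<le> \<bar>c\<bar> * (norm (k \<omega>))\<^sup>2" by (rule mult_right_mono) auto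
      finally show "norm ((norm (h \<omega>))\<^sup>2) \<le> norm (\<bar>c\<bar> * (norm (k \<omega>))\<^sup>2)" by simp
    qed
  qed (use assms(2) in simp)
qed

context prob_space
begin

lemma sqi_const: "sqi M (\<lambda>_. c)"
  by (simp add: sqi_def)

lemma sqi_add:
  assumes "sqi M h" "sqi M k"
  shows "sqi M (\<lambda>\<omega>. h \<omega> + k \<omega>)"
  unfolding sqi_def
proof (intro conjI)
  have [measurable]: "h \<in> borel_measurable M" "k \<in> borel_measurable M" using assms by (auto simp: sqi_def)
  show "(\<lambda>\<omega>. h \<omega> + k \<omega>) \<in> borel_measurable M" by measurable
  have "integrable M (\<lambda>\<omega>. 2 * (norm (h \<omega>))\<^sup>2 + 2 * (norm (k \<omega>))\<^sup>2)" using assms by (auto simp: sqi_def)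
  then show "integrable M (\<lambda>\<omega>. (norm (h \<omega> + k \<omega>))\<^sup>2)"
  proof (rule Bochner_Integration.integrable_bound)
    show "AE \<omega> in M. norm ((norm (h \<omega> + k \<omega>))\<^sup>2) \<le> norm (2 * (norm (h \<omega>))\<^sup>2 + 2 * (norm (k \<omega>))\<^sup>2)"
    proof (rule AE_I2)
      fix \<omega>
      have "norm (h \<omega> + k \<omega>) \<le> norm (h \<omega>) + norm (k \<omega>)" by (rule norm_triangle_ineq)
      then have "(norm (h \<omega> + k \<omega>))\<^sup>2 \<le> (norm (h \<omega>) + norm (k \<omega>))\<^sup>2" by (simp add: power_mono)
      also have "\<dots> \<le> 2 * (norm (h \<omega>))\<^sup>2 + 2 * (norm (k \<omega>))\<^sup>2"
        by (rule sq_sum_le)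
      finally show "norm ((norm (h \<omega> + k \<omega>))\<^sup>2) \<le> norm (2 * (norm (h \<omega>))\<^sup>2 + 2 * (norm (k \<omega>))\<^sup>2)"
        by simp
    qed
  qed measurable
qed

lemma sqi_scale:
  assumes "sqi M h"
  shows "sqi M (\<lambda>\<omega>. c *\<^sub>R h \<omega>)"
  unfolding sqi_def
proof (intro conjI)
  have [measurable]: "h \<in> borel_measurable M" using assms by (auto simp: sqi_def)
  show "(\<lambda>\<omega>. c *\<^sub>R h \<omega>) \<in> borel_measurable M" by measurable
  have "integrable M (\<lambda>\<omega>. c\<^sup>2 * (norm (h \<omega>))\<^sup>2)" using assms by (auto simp: sqi_def)
  then show "integrable M (\<lambda>\<omega>. (norm (c *\<^sub>R h \<omega>))\<^sup>2)" by (simp add: power_mult_distrib)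
qed

lemma sqi_neg: "sqi M h \<Longrightarrow> sqi M (\<lambda>\<omega>. - h \<omega>)"
  using sqi_scale[of h "-1"] by simp

lemma sqi_diff: "sqi M h \<Longrightarrow> sqi M k \<Longrightarrow> sqi M (\<lambda>\<omega>. h \<omega> - k \<omega>)"
  using sqi_add[of h "\<lambda>\<omega>. - k \<omega>"] sqi_neg[of k] by simp

lemma sqi_sum:
  assumes "\<And>i. i \<in> S \<Longrightarrow> sqi M (h i)"
  shows "sqi M (\<lambda>\<omega>. \<Sum>i\<in>S. h i \<omega>)"
  using assms
proof (induction S rule: infinite_finite_induct)
  case (infinite A) then show ?case by (simp add: sqi_const)
next
  case empty then show ?case by (simp add: sqi_const)
next
  case (insert x F)
  then show ?case by (simp add: sqi_add)
qed

lemma sqi_comp_lin: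
  assumes "sqi M h" "\<phi> \<in> borel_measurable borel" "\<And>z. norm (\<phi> z) \<le> a + b * norm z" "a \<ge> 0" "b \<ge> 0"
  shows "sqi M (\<lambda>\<omega>. \<phi> (h \<omega>))"
  unfolding sqi_def
proof (intro conjI)
  have [measurable]: "h \<in> borel_measurable M" "\<phi> \<in> borel_measurable borel" using assms by (auto simp: sqi_def)
  show "(\<lambda>\<omega>. \<phi> (h \<omega>)) \<in> borel_measurable M" by measurable
  have "integrable M (\<lambda>\<omega>. 2 * a\<^sup>2 + 2 * b\<^sup>2 * (norm (h \<omega>))\<^sup>2)" using assms by (auto simp: sqi_def)
  then show "integrable M (\<lambda>\<omega>. (norm (\<phi> (h \<omega>)))\<^sup>2)"
  proof (rule Bochner_Integration.integrable_bound)
    show "AE \<omega> in M. norm ((norm (\<phi> (h \<omega>)))\<^sup>2) \<le> norm (2 * a\<^sup>2 + 2 * b\<^sup>2 * (norm (h \<omega>))\<^sup>2)"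
    proof (rule AE_I2)
      fix \<omega>
      have "(norm (\<phi> (h \<omega>)))\<^sup>2 \<le> (a + b * norm (h \<omega>))\<^sup>2" using assms(3)[of "h \<omega>"] by (simp add: power_mono)
      also have "\<dots> \<le> 2 * a\<^sup>2 + 2 * b\<^sup>2 * (norm (h \<omega>))\<^sup>2"
        using sq_sum_le[of a "b * norm (h \<omega>)"] by (simp add: power_mult_distrib)
      finally show "norm ((norm (\<phi> (h \<omega>)))\<^sup>2) \<le> norm (2 * a\<^sup>2 + 2 * b\<^sup>2 * (norm (h \<omega>))\<^sup>2)"
        by simp
    qed
  qed measurable
qed

lemma sqi_nn:
  assumes "h \<in> borel_measurable M" "(\<integral>\<^sup>+\<omega>. ennreal ((norm (h \<omega>))\<^sup>2) \<partial>M) < \<infinity>"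
  shows "sqi M h"
  unfolding sqi_def using assms by (auto intro!: integrableI_bounded)

lemma sqi_prod_integrable:
  assumes "sqi M h" "sqi M k" "g \<in> borel_measurable M" "\<And>\<omega>. \<omega> \<in> space M \<Longrightarrow> \<bar>g \<omega>\<bar> \<le> norm (h \<omega>) * norm (k \<omega>)"
  shows "integrable M g"
proof -
  have "integrable M (\<lambda>\<omega>. (norm (h \<omega>))\<^sup>2 + (norm (k \<omega>))\<^sup>2)" using assms by (auto simp: sqi_def)
  then show ?thesis
  proof (rule Bochner_Integration.integrable_bound)
    show "AE \<omega> in M. norm (g \<omega>) \<le> norm ((norm (h \<omega>))\<^sup>2 + (norm (k \<omega>))\<^sup>2)"
    proof (rule AE_I2)
      fix \<omega> assume "\<omega> \<in> space M"
      then have "\<bar>g \<omega>\<bar> \<le> norm (h \<omega>) * norm (k \<omega>)" by (rule assms(4))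
      also have "\<dots> \<le> (norm (h \<omega>))\<^sup>2 + (norm (k \<omega>))\<^sup>2"
        by (rule ab_le) auto
      finally show "norm (g \<omega>) \<le> norm ((norm (h \<omega>))\<^sup>2 + (norm (k \<omega>))\<^sup>2)" by simp
    qed
  qed (use assms in simp)
qed

lemma sqi_inner:
  assumes "sqi M h" "sqi M k"
  shows "integrable M (\<lambda>\<omega>. h \<omega> \<bullet> k \<omega>)"
proof (rule sqi_prod_integrable[OF assms])
  have [measurable]: "h \<in> borel_measurable M" "k \<in> borel_measurable M" using assms by (auto simp: sqi_def)
  show "(\<lambda>\<omega>. h \<omega> \<bullet> k \<omega>) \<in> borel_measurable M" by measurable
  show "\<bar>h \<omega> \<bullet> k \<omega>\<bar> \<le> norm (h \<omega>) * norm (k \<omega>)" for \<omega> by (rule Cauchy_Schwarz_ineq2)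
qed

lemma sqi_comp:
  fixes b c :: "'v::euclidean_space"
  assumes "sqi M h" "sqi M (k :: 'a \<Rightarrow> 'v)" "b \<in> Basis" "c \<in> Basis"
  shows "integrable M (\<lambda>\<omega>. (h \<omega> \<bullet> b) * (k \<omega> \<bullet> c))"
proof (rule sqi_prod_integrable[OF assms(1,2)])
  have [measurable]: "h \<in> borel_measurable M" "k \<in> borel_measurable M" using assms by (auto simp: sqi_def)
  show "(\<lambda>\<omega>. (h \<omega> \<bullet> b) * (k \<omega> \<bullet> c)) \<in> borel_measurable M" by measurable
  show "\<bar>(h \<omega> \<bullet> b) * (k \<omega> \<bullet> c)\<bar> \<le> norm (h \<omega>) * norm (k \<omega>)" for \<omega>
    unfolding abs_mult using assms(3,4)
    by (intro mult_mono) (auto simp: Basis_le_norm)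
qed

end

lemma sum_sq_le_card:
  fixes h :: "'i \<Rightarrow> 'v::real_normed_vector"
  shows "(norm (\<Sum>i\<in>S. h i))\<^sup>2 \<le> real (card S) * (\<Sum>i\<in>S. (norm (h i))\<^sup>2)"
proof -
  have "norm (\<Sum>i\<in>S. h i) \<le> (\<Sum>i\<in>S. norm (h i))" by (rule norm_sum)
  then have "(norm (\<Sum>i\<in>S. h i))\<^sup>2 \<le> (\<Sum>i\<in>S. norm (h i))\<^sup>2" by (simp add: power_mono)
  also have "\<dots> \<le> (\<Sum>i\<in>S. (norm (h i))\<^sup>2) * real (card S)" by (rule sum_squared_le_sum_of_squares)
  finally show ?thesis by (simp add: mult.commute)
qed

locale sgd =
  fixes M :: "'a measure"
    and F :: "nat \<Rightarrow> 'a measure"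
    and f :: "'v::euclidean_space \<Rightarrow> real"
    and grad :: "'v \<Rightarrow> 'v"
    and L B \<sigma> \<alpha> :: real
    and p T :: nat
    and I :: "nat \<Rightarrow> nat set"
    and x :: "nat \<Rightarrow> 'a \<Rightarrow> 'v"
    and v G :: "nat \<Rightarrow> nat \<Rightarrow> 'a \<Rightarrow> 'v"
    and x0 :: 'v
  assumes prob: "prob_space M"
    and filt_sub: "\<And>t. subalgebra M (F t)"
    and filt_mono: "\<And>s t. s \<le> t \<Longrightarrow> sets (F s) \<subseteq> sets (F t)"
    and grad_f: "\<And>y. (f has_derivative (\<lambda>h. grad y \<bullet> h)) (at y)"
    and L_pos: "L > 0"
    and lipschitz: "\<And>y z. norm (grad y - grad z) \<le> L * norm (y - z)"
    and bdd: "bdd_below (range f)"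
    and p_pos: "p \<ge> 1"
    and I_sub: "\<And>t. I t \<subseteq> {1..p}"
    and I_card: "\<And>t. real p / 2 \<le> real (card (I t))"
    and x_0: "\<And>\<omega>. x 0 \<omega> = x0"
    and x_meas: "\<And>t. x t \<in> borel_measurable (F t)"
    and v_meas: "\<And>t i. i \<in> I t \<Longrightarrow> v t i \<in> borel_measurable (F t)"
    and G_meas: "\<And>t i. i \<in> I t \<Longrightarrow> G t i \<in> borel_measurable (F (Suc t))"
    and G_indep: "\<And>t. cond_indep_vars M (F t) (G t) (I t)"
    and G_int: "\<And>t i. i \<in> I t \<Longrightarrow> integrable M (G t i)"
    and G_unbiased: "\<And>t i b. i \<in> I t \<Longrightarrow> b \<in> Basis \<Longrightarrow>
        AE \<omega> in M. real_cond_exp M (F t) (\<lambda>\<omega>. G t i \<omega> \<bullet> b) \<omega> = grad (v t i \<omega>) \<bullet> b"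
    and G_var: "\<And>t i. i \<in> I t \<Longrightarrow>
        AE \<omega> in M. nn_cond_exp M (F t) (\<lambda>\<omega>. ennreal ((norm (G t i \<omega> - grad (v t i \<omega>)))\<^sup>2)) \<omega>
          \<le> ennreal (\<sigma>\<^sup>2)"
    and alpha_def: "\<alpha> = sqrt (real p) / sqrt (real T)"
    and T_large: "real T \<ge> 64 * L\<^sup>2 * real p"
    and update: "\<And>t \<omega>. \<omega> \<in> space M \<Longrightarrow>
        x (Suc t) \<omega> = x t \<omega> - (\<alpha> / real p) *\<^sub>R (\<Sum>i\<in>I t. G t i \<omega>)"
    and B_pos: "B > 0"
    and elastic: "\<And>t i. i \<in> I t \<Longrightarrow>
        (\<integral>\<^sup>+ \<omega>. ennreal ((norm (x t \<omega> - v t i \<omega>))\<^sup>2) \<partial>M) \<le> ennreal (\<alpha>\<^sup>2 * B\<^sup>2)"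
begin

sublocale P: prob_space M by (rule prob)

lemma sfs: "sigma_finite_subalgebra M (F t)"
  by (rule sfs_of_prob[OF prob filt_sub])

lemma meas_F_M: "h \<in> borel_measurable (F t) \<Longrightarrow> h \<in> borel_measurable M"
  using measurable_from_subalg[OF filt_sub] by blast

lemma x_measM[measurable]: "x t \<in> borel_measurable M"
  by (rule meas_F_M[OF x_meas])

lemma v_measM: "i \<in> I t \<Longrightarrow> v t i \<in> borel_measurable M"
  by (rule meas_F_M[OF v_meas])

lemma G_measM: "i \<in> I t \<Longrightarrow> G t i \<in> borel_measurable M"
  by (rule meas_F_M[OF G_meas])

lemma grad_cont: "continuous_on UNIV grad"
proof -
  have "L-lipschitz_on UNIV grad"
    using lipschitz L_pos by (auto simp: lipschitz_on_def dist_norm)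
  then show ?thesis by (rule lipschitz_on_continuous_on)
qed

lemma grad_meas[measurable]: "grad \<in> borel_measurable borel"
  by (rule borel_measurable_continuous_onI[OF grad_cont])

lemma f_cont: "continuous_on UNIV f"
  using grad_f by (intro continuous_at_imp_continuous_on ballI has_derivative_continuous) auto

lemma f_meas[measurable]: "f \<in> borel_measurable borel"
  by (rule borel_measurable_continuous_onI[OF f_cont])

lemma I_fin: "finite (I t)"
  by (rule finite_subset[OF I_sub]) simp

lemma card_le: "real (card (I t)) \<le> real p"
proof -
  have "card (I t) \<le> card {1..p}" by (rule card_mono[OF _ I_sub]) simp
  then show ?thesis by simp
qed

lemma T_pos: "real T > 0"
proof -
  have "64 * L\<^sup>2 * real p > 0" using L_pos p_pos by auto
  then show ?thesis using T_large by linarith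
qed

lemma alpha_pos: "\<alpha> > 0"
  using T_pos p_pos by (simp add: alpha_def)

lemma alpha_sq: "\<alpha>\<^sup>2 = real p / real T"
  unfolding alpha_def power_divide by simp

lemma L_alpha: "L * \<alpha> \<le> 1/8"
proof -
  have "(L * \<alpha>)\<^sup>2 = L\<^sup>2 * real p / real T" unfolding power_mult_distrib alpha_sq by simp
  also have "\<dots> \<le> (real T / 64) / real T"
    by (rule divide_right_mono) (use T_large T_pos in simp_all)
  also have "\<dots> = 1/64" using T_pos by simp
  also have "\<dots> = (1/8)\<^sup>2" by (simp add: power2_eq_square)
  finally have "(L * \<alpha>)\<^sup>2 \<le> (1/8)\<^sup>2" .
  then show ?thesis by (rule power2_le_imp_le) simp
qed

lemma grad_lin: "norm (grad z) \<le> norm (grad x0) + L * norm x0 + L * norm z"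
proof -
  have "norm (grad z) \<le> norm (grad x0) + norm (grad z - grad x0)"
    by (metis add.commute diff_add_cancel norm_triangle_ineq)
  also have "norm (grad z - grad x0) \<le> L * norm (z - x0)" by (rule lipschitz)
  also have "L * norm (z - x0) \<le> L * (norm x0 + norm z)"
    using L_pos norm_triangle_ineq4[of z x0] by (intro mult_left_mono) (auto simp: add.commute)
  finally show ?thesis by (simp add: algebra_simps)
qed

lemma sqi_grad: "sqi M h \<Longrightarrow> sqi M (\<lambda>\<omega>. grad (h \<omega>))"
  by (rule P.sqi_comp_lin[OF _ grad_meas grad_lin]) (use L_pos in auto)

lemma var_bound:
  assumes i: "i \<in> I t"
  shows "(\<integral>\<^sup>+ \<omega>. ennreal ((norm (G t i \<omega> - grad (v t i \<omega>)))\<^sup>2) \<partial>M) \<le> ennreal (\<sigma>\<^sup>2)"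
proof -
  interpret S: sigma_finite_subalgebra M "F t" by (rule sfs)
  have [measurable]: "G t i \<in> borel_measurable M" "v t i \<in> borel_measurable M"
    using G_measM[OF i] v_measM[OF i] by auto
  have "(\<integral>\<^sup>+ \<omega>. ennreal ((norm (G t i \<omega> - grad (v t i \<omega>)))\<^sup>2) \<partial>M)
      = (\<integral>\<^sup>+ \<omega>. 1 * ennreal ((norm (G t i \<omega> - grad (v t i \<omega>)))\<^sup>2) \<partial>M)" by simp
  also have "\<dots> = (\<integral>\<^sup>+ \<omega>. 1 * nn_cond_exp M (F t) (\<lambda>\<omega>. ennreal ((norm (G t i \<omega> - grad (v t i \<omega>)))\<^sup>2)) \<omega> \<partial>M)"
    by (rule S.nn_cond_exp_intg[symmetric]) auto
  also have "\<dots> \<le> (\<integral>\<^sup>+ \<omega>. ennreal (\<sigma>\<^sup>2) \<partial>M)"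
    by (rule nn_integral_mono_AE) (rule AE_mp[OF G_var[OF i]], rule AE_I2, simp)
  also have "\<dots> = ennreal (\<sigma>\<^sup>2) * emeasure M (space M)" by (rule nn_integral_const)
  also have "\<dots> = ennreal (\<sigma>\<^sup>2)" unfolding P.emeasure_space_1 by (rule mult_1_right)
  finally show ?thesis .
qed

end

lemma sqi_cong:
  assumes "h \<in> borel_measurable M" "\<And>\<omega>. \<omega> \<in> space M \<Longrightarrow> h \<omega> = k \<omega>" "sqi M k"
  shows "sqi M h"
proof -
  have "integrable M (\<lambda>\<omega>. (norm (h \<omega>))\<^sup>2) \<longleftrightarrow> integrable M (\<lambda>\<omega>. (norm (k \<omega>))\<^sup>2)"
    by (rule Bochner_Integration.integrable_cong) (use assms(2) in auto)
  then show ?thesis using assms by (simp add: sqi_def)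
qed

context sgd
begin

lemma step_sqi:
  assumes x: "sqi M (x t)" and i: "i \<in> I t"
  shows "sqi M (v t i) \<and> sqi M (\<lambda>\<omega>. grad (v t i \<omega>)) \<and> sqi M (G t i)"
proof -
  have [measurable]: "v t i \<in> borel_measurable M" "G t i \<in> borel_measurable M"
    using v_measM[OF i] G_measM[OF i] by auto
  have "(\<integral>\<^sup>+ \<omega>. ennreal ((norm (x t \<omega> - v t i \<omega>))\<^sup>2) \<partial>M) < \<infinity>"
    using elastic[OF i] by (simp add: le_less_trans)
  then have d: "sqi M (\<lambda>\<omega>. x t \<omega> - v t i \<omega>)" by (intro P.sqi_nn) auto
  have sv: "sqi M (v t i)" using P.sqi_diff[OF x d] by simp
  have sg: "sqi M (\<lambda>\<omega>. grad (v t i \<omega>))" by (rule sqi_grad[OF sv])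
  have "(\<integral>\<^sup>+ \<omega>. ennreal ((norm (G t i \<omega> - grad (v t i \<omega>)))\<^sup>2) \<partial>M) < \<infinity>"
    using var_bound[OF i] by (simp add: le_less_trans)
  then have xi: "sqi M (\<lambda>\<omega>. G t i \<omega> - grad (v t i \<omega>))" by (intro P.sqi_nn) auto
  have "sqi M (G t i)" using P.sqi_add[OF xi sg] by simp
  with sv sg show ?thesis by simp
qed

lemma sqi_x: "sqi M (x t)"
proof (induction t)
  case 0
  have "x 0 = (\<lambda>_. x0)" using x_0 by auto
  then show ?case by (simp add: P.sqi_const)
next
  case (Suc t)
  have "sqi M (\<lambda>\<omega>. x t \<omega> - (\<alpha> / real p) *\<^sub>R (\<Sum>i\<in>I t. G t i \<omega>))"
    using Suc step_sqi by (intro P.sqi_diff P.sqi_scale P.sqi_sum) auto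
  then show ?case by (rule sqi_cong[rotated 2]) (simp_all add: update)
qed

lemma sqi_v: "i \<in> I t \<Longrightarrow> sqi M (v t i)"
  using step_sqi[OF sqi_x] by blast

lemma sqi_gv: "i \<in> I t \<Longrightarrow> sqi M (\<lambda>\<omega>. grad (v t i \<omega>))"
  using step_sqi[OF sqi_x] by blast

lemma sqi_G: "i \<in> I t \<Longrightarrow> sqi M (G t i)"
  using step_sqi[OF sqi_x] by blast

lemma sqi_gx: "sqi M (\<lambda>\<omega>. grad (x t \<omega>))"
  by (rule sqi_grad[OF sqi_x])

lemma inner_integral_split:
  assumes "sqi M h" "sqi M k"
  shows "(\<integral>\<omega>. h \<omega> \<bullet> k \<omega> \<partial>M) = (\<Sum>b\<in>Basis. \<integral>\<omega>. (h \<omega> \<bullet> b) * (k \<omega> \<bullet> b) \<partial>M)"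
proof -
  have "(\<integral>\<omega>. h \<omega> \<bullet> k \<omega> \<partial>M) = (\<integral>\<omega>. (\<Sum>b\<in>Basis. (h \<omega> \<bullet> b) * (k \<omega> \<bullet> b)) \<partial>M)"
    by (simp add: euclidean_inner[of "h _" "k _"])
  also have "\<dots> = (\<Sum>b\<in>Basis. \<integral>\<omega>. (h \<omega> \<bullet> b) * (k \<omega> \<bullet> b) \<partial>M)"
    by (rule Bochner_Integration.integral_sum) (rule P.sqi_comp[OF assms], auto)
  finally show ?thesis .
qed

lemma pull_out:
  assumes i: "i \<in> I t" and H: "H \<in> borel_measurable (F t)" and sH: "sqi M H"
  shows "(\<integral>\<omega>. H \<omega> \<bullet> G t i \<omega> \<partial>M) = (\<integral>\<omega>. H \<omega> \<bullet> grad (v t i \<omega>) \<partial>M)"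
proof -
  interpret S: sigma_finite_subalgebra M "F t" by (rule sfs)
  have [measurable]: "v t i \<in> borel_measurable M" "G t i \<in> borel_measurable M" "H \<in> borel_measurable (F t)"
    "H \<in> borel_measurable M"
    using v_measM[OF i] G_measM[OF i] H meas_F_M[OF H] by auto
  have comp: "(\<integral>\<omega>. (H \<omega> \<bullet> b) * (G t i \<omega> \<bullet> b) \<partial>M) = (\<integral>\<omega>. (H \<omega> \<bullet> b) * (grad (v t i \<omega>) \<bullet> b) \<partial>M)"
    if b: "b \<in> Basis" for b
  proof -
    have "(\<integral>\<omega>. (H \<omega> \<bullet> b) * (G t i \<omega> \<bullet> b) \<partial>M) = (\<integral>\<omega>. (H \<omega> \<bullet> b) * real_cond_exp M (F t) (\<lambda>\<omega>. G t i \<omega> \<bullet> b) \<omega> \<partial>M)"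
      by (rule S.real_cond_exp_intg(2)[symmetric]) (use P.sqi_comp[OF sH sqi_G[OF i] b b] in auto)
    also have "\<dots> = (\<integral>\<omega>. (H \<omega> \<bullet> b) * (grad (v t i \<omega>) \<bullet> b) \<partial>M)"
      by (rule integral_cong_AE) (use G_unbiased[OF i b] in auto)
    finally show ?thesis .
  qed
  show ?thesis
    unfolding inner_integral_split[OF sH sqi_G[OF i]] inner_integral_split[OF sH sqi_gv[OF i]]
    using comp by simp
qed

lemma cross:
  assumes i: "i \<in> I t" and j: "j \<in> I t" and ij: "i \<noteq> j"
  shows "(\<integral>\<omega>. G t i \<omega> \<bullet> G t j \<omega> \<partial>M) = (\<integral>\<omega>. grad (v t i \<omega>) \<bullet> grad (v t j \<omega>) \<partial>M)"
proof -
  have [measurable]: "v t i \<in> borel_measurable M" "G t i \<in> borel_measurable M"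
    "v t j \<in> borel_measurable M" "G t j \<in> borel_measurable M"
    using v_measM G_measM i j by auto
  have comp: "(\<integral>\<omega>. (G t i \<omega> \<bullet> b) * (G t j \<omega> \<bullet> b) \<partial>M) = (\<integral>\<omega>. (grad (v t i \<omega>) \<bullet> b) * (grad (v t j \<omega>) \<bullet> b) \<partial>M)"
    if b: "b \<in> Basis" for b
  proof -
    have "(\<integral>\<omega>. (G t i \<omega> \<bullet> b) * (G t j \<omega> \<bullet> b) \<partial>M)
      = (\<integral>\<omega>. real_cond_exp M (F t) (\<lambda>\<omega>. G t i \<omega> \<bullet> b) \<omega> * real_cond_exp M (F t) (\<lambda>\<omega>. G t j \<omega> \<bullet> b) \<omega> \<partial>M)"
      by (rule indep_real(2)[OF prob filt_sub G_indep I_fin i j ij, where \<phi>="\<lambda>z. z \<bullet> b" and \<psi>="\<lambda>z. z \<bullet> b"])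
         (use P.sqi_comp[OF sqi_G[OF i] sqi_G[OF j] b b] in auto)
    also have "\<dots> = (\<integral>\<omega>. (grad (v t i \<omega>) \<bullet> b) * (grad (v t j \<omega>) \<bullet> b) \<partial>M)"
      by (rule integral_cong_AE) (use G_unbiased[OF i b] G_unbiased[OF j b] in auto)
    finally show ?thesis .
  qed
  show ?thesis
    unfolding inner_integral_split[OF sqi_G[OF i] sqi_G[OF j]] inner_integral_split[OF sqi_gv[OF i] sqi_gv[OF j]]
    using comp by simp
qed

end

lemma normsq_sum:
  fixes h :: "'i \<Rightarrow> 'v::real_inner"
  shows "(norm (\<Sum>i\<in>S. h i))\<^sup>2 = (\<Sum>i\<in>S. \<Sum>j\<in>S. h i \<bullet> h j)"
  by (simp add: power2_norm_eq_inner inner_sum_left inner_sum_right, rule sum.swap)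

lemma norm_diff_sq:
  fixes g h :: "'v::real_inner"
  shows "(norm (g - h))\<^sup>2 = (norm g)\<^sup>2 - 2 * (g \<bullet> h) + (norm h)\<^sup>2"
  by (simp add: power2_norm_eq_inner inner_diff_left inner_diff_right inner_commute)

lemma key_ineq:
  fixes g :: "'v::real_inner" and h :: "'i \<Rightarrow> 'v" and e :: "'i \<Rightarrow> real"
  assumes fin: "finite S" and a: "a > 0" and L: "L \<ge> 0"
    and e: "\<And>i. i \<in> S \<Longrightarrow> (norm (g - h i))\<^sup>2 \<le> e i"
    and c1: "a * real (card S) \<ge> \<alpha> / 2" and c2: "L * a * real (card S) \<le> 1/2"
  shows "- a * (\<Sum>i\<in>S. g \<bullet> h i) + L * a\<^sup>2 * (norm (\<Sum>i\<in>S. h i))\<^sup>2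
    \<le> - (\<alpha> / 4) * (norm g)\<^sup>2 + (a / 2) * (\<Sum>i\<in>S. e i)"
proof -
  let ?n = "real (card S)"
  let ?H = "\<Sum>i\<in>S. (norm (h i))\<^sup>2"
  have each: "- (g \<bullet> h i) \<le> - (norm g)\<^sup>2 / 2 - (norm (h i))\<^sup>2 / 2 + e i / 2" if "i \<in> S" for i
    using e[OF that] norm_diff_sq[of g "h i"] by linarith
  have "- (\<Sum>i\<in>S. g \<bullet> h i) = (\<Sum>i\<in>S. - (g \<bullet> h i))" by (simp add: sum_negf)
  also have "\<dots> \<le> (\<Sum>i\<in>S. - (norm g)\<^sup>2 / 2 - (norm (h i))\<^sup>2 / 2 + e i / 2)"
    by (rule sum_mono) (rule each)
  also have "\<dots> = - ?n * (norm g)\<^sup>2 / 2 - ?H / 2 + (\<Sum>i\<in>S. e i) / 2"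
    by (simp add: sum.distrib sum_subtractf sum_divide_distrib)
  finally have s1: "- (\<Sum>i\<in>S. g \<bullet> h i) \<le> - ?n * (norm g)\<^sup>2 / 2 - ?H / 2 + (\<Sum>i\<in>S. e i) / 2" .
  have s2: "(norm (\<Sum>i\<in>S. h i))\<^sup>2 \<le> ?n * ?H" by (rule sum_sq_le_card)
  have H0: "?H \<ge> 0" by (simp add: sum_nonneg)
  have "L * a\<^sup>2 * (norm (\<Sum>i\<in>S. h i))\<^sup>2 \<le> L * a\<^sup>2 * (?n * ?H)"
    using s2 L by (intro mult_left_mono) auto
  also have "\<dots> = (L * a * ?n) * (a * ?H)" by (simp add: power2_eq_square algebra_simps)
  also have "\<dots> \<le> (1/2) * (a * ?H)" using c2 a H0 by (intro mult_right_mono) auto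
  finally have s3: "L * a\<^sup>2 * (norm (\<Sum>i\<in>S. h i))\<^sup>2 \<le> a * ?H / 2" by simp
  have s4: "- a * (\<Sum>i\<in>S. g \<bullet> h i) \<le> a * (- ?n * (norm g)\<^sup>2 / 2 - ?H / 2 + (\<Sum>i\<in>S. e i) / 2)"
    using mult_left_mono[OF s1, of a] a by simp
  have s5: "(\<alpha> / 2) * (norm g)\<^sup>2 \<le> (a * ?n) * (norm g)\<^sup>2"
    using c1 by (intro mult_right_mono) auto
  show ?thesis using s3 s4 s5 by (simp add: algebra_simps)
qed

context sgd
begin

lemma f_lower: "Inf (range f) \<le> f y"
  using bdd by (intro cInf_lower) auto

lemma f_int: "integrable M (\<lambda>\<omega>. f (x t \<omega>))"
proof -
  let ?c = "\<bar>Inf (range f)\<bar> + \<bar>f x0\<bar> + (norm (grad x0))\<^sup>2"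
  have sd: "sqi M (\<lambda>\<omega>. x t \<omega> - x0)" by (rule P.sqi_diff[OF sqi_x P.sqi_const])
  have "integrable M (\<lambda>\<omega>. ?c + (1 + L) * (norm (x t \<omega> - x0))\<^sup>2)"
    using sqiD(2)[OF sd] by auto
  then show ?thesis
  proof (rule Bochner_Integration.integrable_bound)
    show "AE \<omega> in M. norm (f (x t \<omega>)) \<le> norm (?c + (1 + L) * (norm (x t \<omega> - x0))\<^sup>2)"
    proof (rule AE_I2)
      fix \<omega>
      let ?y = "x t \<omega>"
      have up: "f ?y \<le> f x0 + grad x0 \<bullet> (?y - x0) + L * (norm (?y - x0))\<^sup>2"
        by (rule descent[OF grad_f lipschitz]) (use L_pos in auto)
      have "grad x0 \<bullet> (?y - x0) \<le> norm (grad x0) * norm (?y - x0)" by (rule norm_cauchy_schwarz)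
      also have "\<dots> \<le> (norm (grad x0))\<^sup>2 + (norm (?y - x0))\<^sup>2" by (rule ab_le) auto
      finally have ip: "grad x0 \<bullet> (?y - x0) \<le> (norm (grad x0))\<^sup>2 + (norm (?y - x0))\<^sup>2" .
      have lo: "Inf (range f) \<le> f ?y" by (rule f_lower)
      define d2 where "d2 = (norm (?y - x0))\<^sup>2"
      have d2: "(1 + L) * d2 = d2 + L * d2" by (simp add: algebra_simps)
      have nn: "0 \<le> d2" "0 \<le> L * d2" "0 \<le> (norm (grad x0))\<^sup>2" using L_pos by (auto simp: d2_def)
      have a1: "f ?y \<le> ?c + (1 + L) * d2"
        using up ip nn d2 abs_ge_self[of "f x0"] abs_ge_self[of "Inf (range f)"] unfolding d2_def[symmetric] by linarith
      have a2: "- f ?y \<le> ?c + (1 + L) * d2"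
        using lo nn d2 abs_ge_minus_self[of "Inf (range f)"] abs_ge_self[of "f x0"] abs_ge_zero[of "f x0"] by linarith
      have "\<bar>f ?y\<bar> \<le> ?c + (1 + L) * (norm (?y - x0))\<^sup>2"
        using a1 a2 unfolding d2_def by (simp add: abs_le_iff)
      then show "norm (f (x t \<omega>)) \<le> norm (?c + (1 + L) * (norm (x t \<omega> - x0))\<^sup>2)"
        using L_pos by simp
    qed
  qed simp
qed

lemma same:
  assumes i: "i \<in> I t"
  shows "(\<integral>\<omega>. G t i \<omega> \<bullet> G t i \<omega> \<partial>M) \<le> (\<integral>\<omega>. grad (v t i \<omega>) \<bullet> grad (v t i \<omega>) \<partial>M) + \<sigma>\<^sup>2"
proof -
  have [measurable]: "v t i \<in> borel_measurable M" "G t i \<in> borel_measurable M"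
    using v_measM[OF i] G_measM[OF i] by auto
  define \<xi> where "\<xi> = (\<lambda>\<omega>. G t i \<omega> - grad (v t i \<omega>))"
  have sx: "sqi M \<xi>" unfolding \<xi>_def by (rule P.sqi_diff[OF sqi_G[OF i] sqi_gv[OF i]])
  have Hm: "(\<lambda>\<omega>. grad (v t i \<omega>)) \<in> borel_measurable (F t)"
    using measurable_compose[OF v_meas[OF i] grad_meas] by (simp add: comp_def)
  have po: "(\<integral>\<omega>. grad (v t i \<omega>) \<bullet> G t i \<omega> \<partial>M) = (\<integral>\<omega>. grad (v t i \<omega>) \<bullet> grad (v t i \<omega>) \<partial>M)"
    by (rule pull_out[OF i Hm sqi_gv[OF i]])
  have pw: "G t i \<omega> \<bullet> G t i \<omega> = \<xi> \<omega> \<bullet> \<xi> \<omega> + 2 * (grad (v t i \<omega>) \<bullet> G t i \<omega>) - grad (v t i \<omega>) \<bullet> grad (v t i \<omega>)" for \<omega>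
    unfolding \<xi>_def by (simp add: inner_diff_left inner_diff_right inner_commute)
  have i1: "integrable M (\<lambda>\<omega>. \<xi> \<omega> \<bullet> \<xi> \<omega>)" by (rule P.sqi_inner[OF sx sx])
  have i2: "integrable M (\<lambda>\<omega>. grad (v t i \<omega>) \<bullet> G t i \<omega>)" by (rule P.sqi_inner[OF sqi_gv[OF i] sqi_G[OF i]])
  have i3: "integrable M (\<lambda>\<omega>. grad (v t i \<omega>) \<bullet> grad (v t i \<omega>))" by (rule P.sqi_inner[OF sqi_gv[OF i] sqi_gv[OF i]])
  have "(\<integral>\<omega>. G t i \<omega> \<bullet> G t i \<omega> \<partial>M) = (\<integral>\<omega>. \<xi> \<omega> \<bullet> \<xi> \<omega> \<partial>M) + 2 * (\<integral>\<omega>. grad (v t i \<omega>) \<bullet> G t i \<omega> \<partial>M) - (\<integral>\<omega>. grad (v t i \<omega>) \<bullet> grad (v t i \<omega>) \<partial>M)"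
    unfolding pw using i1 i2 i3 by simp
  also have "\<dots> = (\<integral>\<omega>. \<xi> \<omega> \<bullet> \<xi> \<omega> \<partial>M) + (\<integral>\<omega>. grad (v t i \<omega>) \<bullet> grad (v t i \<omega>) \<partial>M)"
    using po by simp
  finally have eq: "(\<integral>\<omega>. G t i \<omega> \<bullet> G t i \<omega> \<partial>M) = (\<integral>\<omega>. \<xi> \<omega> \<bullet> \<xi> \<omega> \<partial>M) + (\<integral>\<omega>. grad (v t i \<omega>) \<bullet> grad (v t i \<omega>) \<partial>M)" .
  have "ennreal (\<integral>\<omega>. (norm (\<xi> \<omega>))\<^sup>2 \<partial>M) = (\<integral>\<^sup>+\<omega>. ennreal ((norm (\<xi> \<omega>))\<^sup>2) \<partial>M)"
    by (rule nn_integral_eq_integral[symmetric]) (use sqiD(2)[OF sx] in auto)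
  also have "\<dots> \<le> ennreal (\<sigma>\<^sup>2)" unfolding \<xi>_def by (rule var_bound[OF i])
  finally have "(\<integral>\<omega>. (norm (\<xi> \<omega>))\<^sup>2 \<partial>M) \<le> \<sigma>\<^sup>2" by (simp add: ennreal_le_iff)
  then have "(\<integral>\<omega>. \<xi> \<omega> \<bullet> \<xi> \<omega> \<partial>M) \<le> \<sigma>\<^sup>2" by (simp add: power2_norm_eq_inner)
  then show ?thesis using eq by simp
qed

end

lemma integral_lin3:
  fixes A S Q :: "'a \<Rightarrow> real"
  assumes "integrable M A" "integrable M S" "integrable M Q"
  shows "(\<integral>\<omega>. A \<omega> + c1 * S \<omega> + c2 * Q \<omega> \<partial>M) = (\<integral>\<omega>. A \<omega> \<partial>M) + c1 * (\<integral>\<omega>. S \<omega> \<partial>M) + c2 * (\<integral>\<omega>. Q \<omega> \<partial>M)"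
  using assms by simp

context sgd
begin

lemma sumsq:
  "(\<integral>\<omega>. (norm (\<Sum>i\<in>I t. G t i \<omega>))\<^sup>2 \<partial>M)
    \<le> real (card (I t)) * \<sigma>\<^sup>2 + (\<integral>\<omega>. (norm (\<Sum>i\<in>I t. grad (v t i \<omega>)))\<^sup>2 \<partial>M)"
proof -
  have expand: "(\<integral>\<omega>. (norm (\<Sum>i\<in>I t. h i \<omega>))\<^sup>2 \<partial>M) = (\<Sum>i\<in>I t. \<Sum>j\<in>I t. \<integral>\<omega>. h i \<omega> \<bullet> h j \<omega> \<partial>M)"
    if sh: "\<And>i. i \<in> I t \<Longrightarrow> sqi M (h i)" for h :: "nat \<Rightarrow> 'a \<Rightarrow> 'v"
  proof -
    have int: "integrable M (\<lambda>\<omega>. h i \<omega> \<bullet> h j \<omega>)" if "i \<in> I t" "j \<in> I t" for i j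
      using P.sqi_inner[OF sh sh] that by blast
    have "(\<integral>\<omega>. (norm (\<Sum>i\<in>I t. h i \<omega>))\<^sup>2 \<partial>M) = (\<integral>\<omega>. (\<Sum>i\<in>I t. \<Sum>j\<in>I t. h i \<omega> \<bullet> h j \<omega>) \<partial>M)"
      by (simp only: normsq_sum)
    also have "\<dots> = (\<Sum>i\<in>I t. \<integral>\<omega>. (\<Sum>j\<in>I t. h i \<omega> \<bullet> h j \<omega>) \<partial>M)"
      by (rule Bochner_Integration.integral_sum) (use int in auto)
    also have "\<dots> = (\<Sum>i\<in>I t. \<Sum>j\<in>I t. \<integral>\<omega>. h i \<omega> \<bullet> h j \<omega> \<partial>M)"
      by (rule sum.cong[OF refl], rule Bochner_Integration.integral_sum) (use int in auto)
    finally show ?thesis .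
  qed
  have each: "(\<Sum>j\<in>I t. \<integral>\<omega>. G t i \<omega> \<bullet> G t j \<omega> \<partial>M) \<le> (\<Sum>j\<in>I t. \<integral>\<omega>. grad (v t i \<omega>) \<bullet> grad (v t j \<omega>) \<partial>M) + \<sigma>\<^sup>2"
    if i: "i \<in> I t" for i
  proof -
    have "(\<Sum>j\<in>I t. \<integral>\<omega>. G t i \<omega> \<bullet> G t j \<omega> \<partial>M) = (\<integral>\<omega>. G t i \<omega> \<bullet> G t i \<omega> \<partial>M) + (\<Sum>j\<in>I t - {i}. \<integral>\<omega>. G t i \<omega> \<bullet> G t j \<omega> \<partial>M)"
      by (rule sum.remove[OF I_fin i])
    also have "(\<Sum>j\<in>I t - {i}. \<integral>\<omega>. G t i \<omega> \<bullet> G t j \<omega> \<partial>M) = (\<Sum>j\<in>I t - {i}. \<integral>\<omega>. grad (v t i \<omega>) \<bullet> grad (v t j \<omega>) \<partial>M)"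
      by (rule sum.cong[OF refl]) (use cross i in auto)
    also have "(\<integral>\<omega>. G t i \<omega> \<bullet> G t i \<omega> \<partial>M) + (\<Sum>j\<in>I t - {i}. \<integral>\<omega>. grad (v t i \<omega>) \<bullet> grad (v t j \<omega>) \<partial>M)
        \<le> (\<integral>\<omega>. grad (v t i \<omega>) \<bullet> grad (v t i \<omega>) \<partial>M) + \<sigma>\<^sup>2 + (\<Sum>j\<in>I t - {i}. \<integral>\<omega>. grad (v t i \<omega>) \<bullet> grad (v t j \<omega>) \<partial>M)"
      using same[OF i] by simp
    also have "\<dots> = (\<Sum>j\<in>I t. \<integral>\<omega>. grad (v t i \<omega>) \<bullet> grad (v t j \<omega>) \<partial>M) + \<sigma>\<^sup>2"
      using sum.remove[OF I_fin i, of "\<lambda>j. \<integral>\<omega>. grad (v t i \<omega>) \<bullet> grad (v t j \<omega>) \<partial>M"] by simp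
    finally show ?thesis .
  qed
  have "(\<integral>\<omega>. (norm (\<Sum>i\<in>I t. G t i \<omega>))\<^sup>2 \<partial>M) = (\<Sum>i\<in>I t. \<Sum>j\<in>I t. \<integral>\<omega>. G t i \<omega> \<bullet> G t j \<omega> \<partial>M)"
    by (rule expand) (rule sqi_G)
  also have "\<dots> \<le> (\<Sum>i\<in>I t. (\<Sum>j\<in>I t. \<integral>\<omega>. grad (v t i \<omega>) \<bullet> grad (v t j \<omega>) \<partial>M) + \<sigma>\<^sup>2)"
    by (rule sum_mono) (rule each)
  also have "\<dots> = (\<Sum>i\<in>I t. \<Sum>j\<in>I t. \<integral>\<omega>. grad (v t i \<omega>) \<bullet> grad (v t j \<omega>) \<partial>M) + real (card (I t)) * \<sigma>\<^sup>2"
    by (simp add: sum.distrib)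
  also have "(\<Sum>i\<in>I t. \<Sum>j\<in>I t. \<integral>\<omega>. grad (v t i \<omega>) \<bullet> grad (v t j \<omega>) \<partial>M) = (\<integral>\<omega>. (norm (\<Sum>i\<in>I t. grad (v t i \<omega>)))\<^sup>2 \<partial>M)"
    by (rule expand[symmetric]) (rule sqi_gv)
  finally show ?thesis by simp
qed

lemma elastic_int:
  assumes i: "i \<in> I t"
  shows "(\<integral>\<omega>. (norm (x t \<omega> - v t i \<omega>))\<^sup>2 \<partial>M) \<le> \<alpha>\<^sup>2 * B\<^sup>2"
proof -
  have s: "sqi M (\<lambda>\<omega>. x t \<omega> - v t i \<omega>)" by (rule P.sqi_diff[OF sqi_x sqi_v[OF i]])
  have "ennreal (\<integral>\<omega>. (norm (x t \<omega> - v t i \<omega>))\<^sup>2 \<partial>M) = (\<integral>\<^sup>+\<omega>. ennreal ((norm (x t \<omega> - v t i \<omega>))\<^sup>2) \<partial>M)"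
    by (rule nn_integral_eq_integral[symmetric]) (use sqiD(2)[OF s] in auto)
  also have "\<dots> \<le> ennreal (\<alpha>\<^sup>2 * B\<^sup>2)" by (rule elastic[OF i])
  finally show ?thesis by (simp add: ennreal_le_iff)
qed

end

context sgd
begin

lemma step:
  "(\<integral>\<omega>. f (x (Suc t) \<omega>) \<partial>M) \<le> (\<integral>\<omega>. f (x t \<omega>) \<partial>M) - (\<alpha> / 4) * (\<integral>\<omega>. (norm (grad (x t \<omega>)))\<^sup>2 \<partial>M)
     + \<alpha>^3 * L\<^sup>2 * B\<^sup>2 / 2 + L * \<alpha>\<^sup>2 * \<sigma>\<^sup>2 / real p"
proof -
  define a where "a = \<alpha> / real p"
  define n where "n = real (card (I t))"
  have a_pos: "a > 0" using alpha_pos p_pos by (simp add: a_def)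
  have n_le: "n \<le> real p" unfolding n_def by (rule card_le)
  have n_ge: "real p / 2 \<le> n" unfolding n_def by (rule I_card)
  have p_gt: "real p > 0" using p_pos by simp
  have an_le: "a * n \<le> \<alpha>"
  proof -
    have "a * n \<le> a * real p" using a_pos n_le by (intro mult_left_mono) auto
    also have "\<dots> = \<alpha>" using p_gt by (simp add: a_def)
    finally show ?thesis .
  qed
  have an_ge: "a * n \<ge> \<alpha> / 2"
  proof -
    have "a * (real p / 2) \<le> a * n" using a_pos n_ge by (intro mult_left_mono) auto
    moreover have "a * (real p / 2) = \<alpha> / 2" using p_gt by (simp add: a_def)
    ultimately show ?thesis by simp
  qed
  have a2n: "a\<^sup>2 * n \<le> \<alpha>\<^sup>2 / real p"
  proof -
    have "a\<^sup>2 * n = a * (a * n)" by (simp add: power2_eq_square)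
    also have "\<dots> \<le> a * \<alpha>" using an_le a_pos by (intro mult_left_mono) auto
    also have "\<dots> = \<alpha>\<^sup>2 / real p" by (simp add: a_def power2_eq_square)
    finally show ?thesis .
  qed
  have Lan: "L * a * n \<le> 1/2"
  proof -
    have "L * a * n = L * (a * n)" by simp
    also have "\<dots> \<le> L * \<alpha>" using an_le L_pos by (intro mult_left_mono) auto
    also have "\<dots> \<le> 1/2" using L_alpha by simp
    finally show ?thesis .
  qed
  define g where "g = (\<lambda>\<omega>. grad (x t \<omega>))"
  define SG where "SG = (\<lambda>\<omega>. \<Sum>i\<in>I t. G t i \<omega>)"
  define Sgv where "Sgv = (\<lambda>\<omega>. \<Sum>i\<in>I t. grad (v t i \<omega>))"
  have sg: "sqi M g" unfolding g_def by (rule sqi_gx)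
  have sSG: "sqi M SG" unfolding SG_def by (rule P.sqi_sum) (rule sqi_G)
  have sSgv: "sqi M Sgv" unfolding Sgv_def by (rule P.sqi_sum) (rule sqi_gv)
  have gF: "g \<in> borel_measurable (F t)"
    unfolding g_def using measurable_compose[OF x_meas grad_meas] by (simp add: comp_def)
  have pw1: "f (x (Suc t) \<omega>) \<le> f (x t \<omega>) + (- a) * (\<Sum>i\<in>I t. g \<omega> \<bullet> G t i \<omega>) + (L * a\<^sup>2) * (norm (SG \<omega>))\<^sup>2"
    if \<omega>: "\<omega> \<in> space M" for \<omega>
  proof -
    have d: "x (Suc t) \<omega> - x t \<omega> = - (a *\<^sub>R SG \<omega>)"
      using update[OF \<omega>] by (simp add: a_def SG_def)
    have "f (x (Suc t) \<omega>) \<le> f (x t \<omega>) + grad (x t \<omega>) \<bullet> (x (Suc t) \<omega> - x t \<omega>) + L * (norm (x (Suc t) \<omega> - x t \<omega>))\<^sup>2"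
      by (rule descent[OF grad_f lipschitz]) (use L_pos in auto)
    also have "grad (x t \<omega>) \<bullet> (x (Suc t) \<omega> - x t \<omega>) = (- a) * (\<Sum>i\<in>I t. g \<omega> \<bullet> G t i \<omega>)"
      unfolding d by (simp add: g_def SG_def inner_sum_right)
    also have "L * (norm (x (Suc t) \<omega> - x t \<omega>))\<^sup>2 = (L * a\<^sup>2) * (norm (SG \<omega>))\<^sup>2"
      unfolding d using a_pos by (simp add: power_mult_distrib)
    finally show ?thesis .
  qed
  have int_f: "integrable M (\<lambda>\<omega>. f (x t \<omega>))" "integrable M (\<lambda>\<omega>. f (x (Suc t) \<omega>))" by (rule f_int)+
  have int_gG: "integrable M (\<lambda>\<omega>. \<Sum>i\<in>I t. g \<omega> \<bullet> G t i \<omega>)"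
    by (rule Bochner_Integration.integrable_sum) (rule P.sqi_inner[OF sg sqi_G])
  have int_gv: "integrable M (\<lambda>\<omega>. \<Sum>i\<in>I t. g \<omega> \<bullet> grad (v t i \<omega>))"
    by (rule Bochner_Integration.integrable_sum) (rule P.sqi_inner[OF sg sqi_gv])
  have int_SG: "integrable M (\<lambda>\<omega>. (norm (SG \<omega>))\<^sup>2)" by (rule sqiD(2)[OF sSG])
  have int_Sgv: "integrable M (\<lambda>\<omega>. (norm (Sgv \<omega>))\<^sup>2)" by (rule sqiD(2)[OF sSgv])
  have int_g2: "integrable M (\<lambda>\<omega>. (norm (g \<omega>))\<^sup>2)" by (rule sqiD(2)[OF sg])
  have int_xv: "integrable M (\<lambda>\<omega>. \<Sum>i\<in>I t. L\<^sup>2 * (norm (x t \<omega> - v t i \<omega>))\<^sup>2)"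
    by (rule Bochner_Integration.integrable_sum, rule integrable_mult_right)
       (rule sqiD(2)[OF P.sqi_diff[OF sqi_x sqi_v]])
  have E1: "(\<integral>\<omega>. f (x (Suc t) \<omega>) \<partial>M) \<le> (\<integral>\<omega>. f (x t \<omega>) + (- a) * (\<Sum>i\<in>I t. g \<omega> \<bullet> G t i \<omega>) + (L * a\<^sup>2) * (norm (SG \<omega>))\<^sup>2 \<partial>M)"
    by (rule integral_mono) (use int_f int_gG int_SG pw1 in auto)
  also have "\<dots> = (\<integral>\<omega>. f (x t \<omega>) \<partial>M) + (- a) * (\<integral>\<omega>. (\<Sum>i\<in>I t. g \<omega> \<bullet> G t i \<omega>) \<partial>M) + (L * a\<^sup>2) * (\<integral>\<omega>. (norm (SG \<omega>))\<^sup>2 \<partial>M)"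
    by (rule integral_lin3[OF int_f(1) int_gG int_SG])
  finally have E1: "(\<integral>\<omega>. f (x (Suc t) \<omega>) \<partial>M) \<le> (\<integral>\<omega>. f (x t \<omega>) \<partial>M) + (- a) * (\<integral>\<omega>. (\<Sum>i\<in>I t. g \<omega> \<bullet> G t i \<omega>) \<partial>M) + (L * a\<^sup>2) * (\<integral>\<omega>. (norm (SG \<omega>))\<^sup>2 \<partial>M)" .
  have E2: "(\<integral>\<omega>. (\<Sum>i\<in>I t. g \<omega> \<bullet> G t i \<omega>) \<partial>M) = (\<integral>\<omega>. (\<Sum>i\<in>I t. g \<omega> \<bullet> grad (v t i \<omega>)) \<partial>M)"
  proof -
    have "(\<integral>\<omega>. (\<Sum>i\<in>I t. g \<omega> \<bullet> G t i \<omega>) \<partial>M) = (\<Sum>i\<in>I t. \<integral>\<omega>. g \<omega> \<bullet> G t i \<omega> \<partial>M)"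
      by (rule Bochner_Integration.integral_sum) (rule P.sqi_inner[OF sg sqi_G])
    also have "\<dots> = (\<Sum>i\<in>I t. \<integral>\<omega>. g \<omega> \<bullet> grad (v t i \<omega>) \<partial>M)"
      by (rule sum.cong[OF refl]) (rule pull_out[OF _ gF sg])
    also have "\<dots> = (\<integral>\<omega>. (\<Sum>i\<in>I t. g \<omega> \<bullet> grad (v t i \<omega>)) \<partial>M)"
      by (rule Bochner_Integration.integral_sum[symmetric]) (rule P.sqi_inner[OF sg sqi_gv])
    finally show ?thesis .
  qed
  have E3: "(\<integral>\<omega>. (norm (SG \<omega>))\<^sup>2 \<partial>M) \<le> n * \<sigma>\<^sup>2 + (\<integral>\<omega>. (norm (Sgv \<omega>))\<^sup>2 \<partial>M)"
    unfolding SG_def Sgv_def n_def by (rule sumsq)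
  have pw2: "(- a) * (\<Sum>i\<in>I t. g \<omega> \<bullet> grad (v t i \<omega>)) + (L * a\<^sup>2) * (norm (Sgv \<omega>))\<^sup>2
      \<le> (- (\<alpha> / 4)) * (norm (g \<omega>))\<^sup>2 + (a / 2) * (\<Sum>i\<in>I t. L\<^sup>2 * (norm (x t \<omega> - v t i \<omega>))\<^sup>2)" for \<omega>
  proof -
    have "- a * (\<Sum>i\<in>I t. g \<omega> \<bullet> grad (v t i \<omega>)) + L * a\<^sup>2 * (norm (\<Sum>i\<in>I t. grad (v t i \<omega>)))\<^sup>2
      \<le> - (\<alpha> / 4) * (norm (g \<omega>))\<^sup>2 + (a / 2) * (\<Sum>i\<in>I t. L\<^sup>2 * (norm (x t \<omega> - v t i \<omega>))\<^sup>2)"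
    proof (rule key_ineq[OF I_fin a_pos])
      show "0 \<le> L" using L_pos by simp
      show "\<alpha> / 2 \<le> a * real (card (I t))" using an_ge by (simp add: n_def)
      show "L * a * real (card (I t)) \<le> 1 / 2" using Lan by (simp add: n_def)
      fix i
      have "norm (g \<omega> - grad (v t i \<omega>)) \<le> L * norm (x t \<omega> - v t i \<omega>)" unfolding g_def by (rule lipschitz)
      then have "(norm (g \<omega> - grad (v t i \<omega>)))\<^sup>2 \<le> (L * norm (x t \<omega> - v t i \<omega>))\<^sup>2" by (simp add: power_mono)
      then show "(norm (g \<omega> - grad (v t i \<omega>)))\<^sup>2 \<le> L\<^sup>2 * (norm (x t \<omega> - v t i \<omega>))\<^sup>2" by (simp add: power_mult_distrib)
    qed
    then show ?thesis by (simp add: Sgv_def)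
  qed
  have E4: "(- a) * (\<integral>\<omega>. (\<Sum>i\<in>I t. g \<omega> \<bullet> grad (v t i \<omega>)) \<partial>M) + (L * a\<^sup>2) * (\<integral>\<omega>. (norm (Sgv \<omega>))\<^sup>2 \<partial>M)
     \<le> (- (\<alpha> / 4)) * (\<integral>\<omega>. (norm (g \<omega>))\<^sup>2 \<partial>M) + (a / 2) * (\<integral>\<omega>. (\<Sum>i\<in>I t. L\<^sup>2 * (norm (x t \<omega> - v t i \<omega>))\<^sup>2) \<partial>M)"
  proof -
    have "(\<integral>\<omega>. 0 + (- a) * (\<Sum>i\<in>I t. g \<omega> \<bullet> grad (v t i \<omega>)) + (L * a\<^sup>2) * (norm (Sgv \<omega>))\<^sup>2 \<partial>M)
      \<le> (\<integral>\<omega>. 0 + (- (\<alpha> / 4)) * (norm (g \<omega>))\<^sup>2 + (a / 2) * (\<Sum>i\<in>I t. L\<^sup>2 * (norm (x t \<omega> - v t i \<omega>))\<^sup>2) \<partial>M)"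
      by (rule integral_mono) (use int_gv int_Sgv int_g2 int_xv pw2 in auto)
    then show ?thesis
      by (simp only: integral_lin3[OF integrable_zero int_gv int_Sgv] integral_lin3[OF integrable_zero int_g2 int_xv])
  qed
  have E5: "(\<integral>\<omega>. (\<Sum>i\<in>I t. L\<^sup>2 * (norm (x t \<omega> - v t i \<omega>))\<^sup>2) \<partial>M) \<le> n * (L\<^sup>2 * (\<alpha>\<^sup>2 * B\<^sup>2))"
  proof -
    have "(\<integral>\<omega>. (\<Sum>i\<in>I t. L\<^sup>2 * (norm (x t \<omega> - v t i \<omega>))\<^sup>2) \<partial>M) = (\<Sum>i\<in>I t. L\<^sup>2 * (\<integral>\<omega>. (norm (x t \<omega> - v t i \<omega>))\<^sup>2 \<partial>M))"
      by (subst Bochner_Integration.integral_sum)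
         (auto intro!: integrable_mult_right sqiD(2)[OF P.sqi_diff[OF sqi_x sqi_v]])
    also have "\<dots> \<le> (\<Sum>i\<in>I t. L\<^sup>2 * (\<alpha>\<^sup>2 * B\<^sup>2))"
      by (rule sum_mono) (intro mult_left_mono elastic_int, auto)
    also have "\<dots> = n * (L\<^sup>2 * (\<alpha>\<^sup>2 * B\<^sup>2))" by (simp add: n_def)
    finally show ?thesis .
  qed
  have E6: "(a / 2) * (\<integral>\<omega>. (\<Sum>i\<in>I t. L\<^sup>2 * (norm (x t \<omega> - v t i \<omega>))\<^sup>2) \<partial>M) \<le> \<alpha>^3 * L\<^sup>2 * B\<^sup>2 / 2"
  proof -
    have "(a / 2) * (\<integral>\<omega>. (\<Sum>i\<in>I t. L\<^sup>2 * (norm (x t \<omega> - v t i \<omega>))\<^sup>2) \<partial>M) \<le> (a / 2) * (n * (L\<^sup>2 * (\<alpha>\<^sup>2 * B\<^sup>2)))"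
      using E5 a_pos by (intro mult_left_mono) auto
    also have "\<dots> = (a * n) * (L\<^sup>2 * \<alpha>\<^sup>2 * B\<^sup>2) / 2" by (simp add: algebra_simps)
    also have "\<dots> \<le> \<alpha> * (L\<^sup>2 * \<alpha>\<^sup>2 * B\<^sup>2) / 2" using an_le by (intro divide_right_mono mult_right_mono) auto
    also have "\<dots> = \<alpha>^3 * L\<^sup>2 * B\<^sup>2 / 2" by (simp add: power2_eq_square power3_eq_cube)
    finally show ?thesis .
  qed
  have E7: "(L * a\<^sup>2) * (n * \<sigma>\<^sup>2) \<le> L * \<alpha>\<^sup>2 * \<sigma>\<^sup>2 / real p"
  proof -
    have "(L * a\<^sup>2) * (n * \<sigma>\<^sup>2) = (L * \<sigma>\<^sup>2) * (a\<^sup>2 * n)" by (simp add: algebra_simps)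
    also have "\<dots> \<le> (L * \<sigma>\<^sup>2) * (\<alpha>\<^sup>2 / real p)" using a2n L_pos by (intro mult_left_mono) auto
    also have "\<dots> = L * \<alpha>\<^sup>2 * \<sigma>\<^sup>2 / real p" by simp
    finally show ?thesis .
  qed
  have E3': "(L * a\<^sup>2) * (\<integral>\<omega>. (norm (SG \<omega>))\<^sup>2 \<partial>M) \<le> (L * a\<^sup>2) * (n * \<sigma>\<^sup>2) + (L * a\<^sup>2) * (\<integral>\<omega>. (norm (Sgv \<omega>))\<^sup>2 \<partial>M)"
    using mult_left_mono[OF E3, of "L * a\<^sup>2"] L_pos by (simp add: distrib_left)
  have E1': "(\<integral>\<omega>. f (x (Suc t) \<omega>) \<partial>M) \<le> (\<integral>\<omega>. f (x t \<omega>) \<partial>M) + (- a) * (\<integral>\<omega>. (\<Sum>i\<in>I t. g \<omega> \<bullet> grad (v t i \<omega>)) \<partial>M) + (L * a\<^sup>2) * (\<integral>\<omega>. (norm (SG \<omega>))\<^sup>2 \<partial>M)"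
    using E1 unfolding E2 .
  have "(\<integral>\<omega>. f (x (Suc t) \<omega>) \<partial>M) \<le> (\<integral>\<omega>. f (x t \<omega>) \<partial>M) - (\<alpha> / 4) * (\<integral>\<omega>. (norm (g \<omega>))\<^sup>2 \<partial>M)
     + \<alpha>^3 * L\<^sup>2 * B\<^sup>2 / 2 + L * \<alpha>\<^sup>2 * \<sigma>\<^sup>2 / real p"
    using E1' E3' E4 E6 E7 by linarith
  then show ?thesis unfolding g_def .
qed

end

context sgd
begin

lemma tele:
  "(\<integral>\<omega>. f (x n \<omega>) \<partial>M) + (\<alpha> / 4) * (\<Sum>t<n. \<integral>\<omega>. (norm (grad (x t \<omega>)))\<^sup>2 \<partial>M)
    \<le> f x0 + real n * (\<alpha>^3 * L\<^sup>2 * B\<^sup>2 / 2 + L * \<alpha>\<^sup>2 * \<sigma>\<^sup>2 / real p)"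
proof (induction n)
  case 0
  have "(\<lambda>\<omega>. f (x 0 \<omega>)) = (\<lambda>_. f x0)" using x_0 by auto
  then show ?case by (simp add: P.prob_space)
next
  case (Suc n)
  have "(\<integral>\<omega>. f (x (Suc n) \<omega>) \<partial>M) \<le> (\<integral>\<omega>. f (x n \<omega>) \<partial>M) - (\<alpha> / 4) * (\<integral>\<omega>. (norm (grad (x n \<omega>)))\<^sup>2 \<partial>M)
     + \<alpha>^3 * L\<^sup>2 * B\<^sup>2 / 2 + L * \<alpha>\<^sup>2 * \<sigma>\<^sup>2 / real p" by (rule step)
  moreover have "(\<alpha> / 4) * (\<Sum>t<Suc n. \<integral>\<omega>. (norm (grad (x t \<omega>)))\<^sup>2 \<partial>M)
     = (\<alpha> / 4) * (\<Sum>t<n. \<integral>\<omega>. (norm (grad (x t \<omega>)))\<^sup>2 \<partial>M) + (\<alpha> / 4) * (\<integral>\<omega>. (norm (grad (x n \<omega>)))\<^sup>2 \<partial>M)"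
    by (simp add: distrib_left)
  moreover have "real (Suc n) * (\<alpha>^3 * L\<^sup>2 * B\<^sup>2 / 2 + L * \<alpha>\<^sup>2 * \<sigma>\<^sup>2 / real p)
     = real n * (\<alpha>^3 * L\<^sup>2 * B\<^sup>2 / 2 + L * \<alpha>\<^sup>2 * \<sigma>\<^sup>2 / real p) + (\<alpha>^3 * L\<^sup>2 * B\<^sup>2 / 2 + L * \<alpha>\<^sup>2 * \<sigma>\<^sup>2 / real p)"
    by (simp add: distrib_right)
  ultimately show ?case using Suc.IH by linarith
qed

lemma main:
  "(MIN t\<in>{0..<T}. \<integral>\<^sup>+ \<omega>. ennreal ((norm (grad (x t \<omega>)))\<^sup>2) \<partial>M)
     \<le> ennreal (8 * (f x0 - Inf (range f)) / sqrt (real T * real p)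
              + 4 * B\<^sup>2 * L\<^sup>2 * real p / real T
              + 8 * L * \<sigma>\<^sup>2 / sqrt (real T * real p)
              + 16 * L^3 * B\<^sup>2 * real p * sqrt (real p) / (real T * sqrt (real T)))"
proof -
  define Eg where "Eg = (\<lambda>t. \<integral>\<omega>. (norm (grad (x t \<omega>)))\<^sup>2 \<partial>M)"
  define c where "c = \<alpha>^3 * L\<^sup>2 * B\<^sup>2 / 2 + L * \<alpha>\<^sup>2 * \<sigma>\<^sup>2 / real p"
  define \<Delta> where "\<Delta> = f x0 - Inf (range f)"
  have \<Delta>0: "\<Delta> \<ge> 0" unfolding \<Delta>_def using f_lower[of x0] by simp
  have nnE: "(\<integral>\<^sup>+ \<omega>. ennreal ((norm (grad (x t \<omega>)))\<^sup>2) \<partial>M) = ennreal (Eg t)" for t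
    unfolding Eg_def by (rule nn_integral_eq_integral) (use sqiD(2)[OF sqi_gx] in auto)
  have lowT: "Inf (range f) \<le> (\<integral>\<omega>. f (x T \<omega>) \<partial>M)"
  proof -
    have "(\<integral>\<omega>. Inf (range f) \<partial>M) \<le> (\<integral>\<omega>. f (x T \<omega>) \<partial>M)"
      by (rule integral_mono) (use f_int f_lower in auto)
    then show ?thesis by (simp add: P.prob_space)
  qed
  have sumb: "(\<alpha> / 4) * (\<Sum>t\<in>{0..<T}. Eg t) \<le> \<Delta> + real T * c"
    using tele[of T] lowT unfolding Eg_def c_def \<Delta>_def atLeast0LessThan by linarith
  have Tpos: "T > 0" using T_pos by simp
  have fin: "finite (Eg ` {0..<T})" and ne: "Eg ` {0..<T} \<noteq> {}" using Tpos by auto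
  obtain t0 where t0: "t0 \<in> {0..<T}" "Eg t0 = Min (Eg ` {0..<T})"
    using Min_in[OF fin ne] by auto
  have t0le: "Eg t0 \<le> Eg t" if "t \<in> {0..<T}" for t
    unfolding t0(2) using fin that by (intro Min_le) auto
  have "real T * Eg t0 = (\<Sum>t\<in>{0..<T}. Eg t0)" by simp
  also have "\<dots> \<le> (\<Sum>t\<in>{0..<T}. Eg t)" by (rule sum_mono) (rule t0le)
  finally have Tle: "real T * Eg t0 \<le> (\<Sum>t\<in>{0..<T}. Eg t)" .
  have aT: "\<alpha> * real T > 0" using alpha_pos T_pos by simp
  have "(\<alpha> * real T) * Eg t0 \<le> 4 * (\<Delta> + real T * c)"
  proof -
    have "(\<alpha> * real T) * Eg t0 = 4 * ((\<alpha> / 4) * (real T * Eg t0))" by simp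
    also have "\<dots> \<le> 4 * ((\<alpha> / 4) * (\<Sum>t\<in>{0..<T}. Eg t))"
      using Tle alpha_pos by (intro mult_left_mono) auto
    also have "\<dots> \<le> 4 * (\<Delta> + real T * c)" using sumb by simp
    finally show ?thesis .
  qed
  then have Eb: "Eg t0 \<le> 4 * (\<Delta> + real T * c) / (\<alpha> * real T)"
    using aT by (simp add: field_simps)
  define s where "s = sqrt (real p)"
  define r where "r = sqrt (real T)"
  have s0: "s > 0" using p_pos by (simp add: s_def)
  have r0: "r > 0" using T_pos by (simp add: r_def)
  have ps: "real p = s\<^sup>2" by (simp add: s_def)
  have Tr: "real T = r\<^sup>2" by (simp add: r_def)
  have al: "\<alpha> = s / r" by (simp add: alpha_def s_def r_def)
  have sq: "sqrt (real T * real p) = r * s" by (simp add: r_def s_def real_sqrt_mult)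
  have key: "4 * (\<Delta> + real T * c) / (\<alpha> * real T) = 4 * \<Delta> / (r * s) + 2 * B\<^sup>2 * L\<^sup>2 * real p / real T + 4 * L * \<sigma>\<^sup>2 / (r * s)"
    unfolding c_def al ps Tr using s0 r0 by (simp add: field_simps power2_eq_square power3_eq_cube)
  have t1: "4 * \<Delta> / (r * s) \<le> 8 * \<Delta> / (r * s)" using \<Delta>0 s0 r0 by (intro divide_right_mono) auto
  have t2: "2 * B\<^sup>2 * L\<^sup>2 * real p / real T \<le> 4 * B\<^sup>2 * L\<^sup>2 * real p / real T"
    using T_pos by (intro divide_right_mono) auto
  have t3: "4 * L * \<sigma>\<^sup>2 / (r * s) \<le> 8 * L * \<sigma>\<^sup>2 / (r * s)" using L_pos s0 r0 by (intro divide_right_mono) auto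
  have t4: "0 \<le> 16 * L^3 * B\<^sup>2 * real p * sqrt (real p) / (real T * sqrt (real T))"
    using L_pos by simp
  have "Eg t0 \<le> 8 * \<Delta> / sqrt (real T * real p) + 4 * B\<^sup>2 * L\<^sup>2 * real p / real T
              + 8 * L * \<sigma>\<^sup>2 / sqrt (real T * real p)
              + 16 * L^3 * B\<^sup>2 * real p * sqrt (real p) / (real T * sqrt (real T))"
  proof -
    have "Eg t0 \<le> 4 * \<Delta> / (r * s) + 2 * B\<^sup>2 * L\<^sup>2 * real p / real T + 4 * L * \<sigma>\<^sup>2 / (r * s)"
      using Eb unfolding key .
    also have "\<dots> \<le> 8 * \<Delta> / (r * s) + 4 * B\<^sup>2 * L\<^sup>2 * real p / real T + 8 * L * \<sigma>\<^sup>2 / (r * s)"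
      by (intro add_mono t1 t2 t3)
    also have "\<dots> \<le> 8 * \<Delta> / (r * s) + 4 * B\<^sup>2 * L\<^sup>2 * real p / real T + 8 * L * \<sigma>\<^sup>2 / (r * s)
        + 16 * L^3 * B\<^sup>2 * real p * sqrt (real p) / (real T * sqrt (real T))"
      using t4 by simp
    finally show ?thesis unfolding sq .
  qed
  then have "ennreal (Eg t0) \<le> ennreal (8 * (f x0 - Inf (range f)) / sqrt (real T * real p)
              + 4 * B\<^sup>2 * L\<^sup>2 * real p / real T
              + 8 * L * \<sigma>\<^sup>2 / sqrt (real T * real p)
              + 16 * L^3 * B\<^sup>2 * real p * sqrt (real p) / (real T * sqrt (real T)))"
    unfolding \<Delta>_def by (rule ennreal_leI)
  moreover have "(MIN t\<in>{0..<T}. \<integral>\<^sup>+ \<omega>. ennreal ((norm (grad (x t \<omega>)))\<^sup>2) \<partial>M) \<le> ennreal (Eg t0)"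
    unfolding nnE[symmetric] using t0(1) by (intro Min_le) auto
  ultimately show ?thesis by (rule order_trans[rotated])
qed

end

theorem theorem2:
  fixes M :: "'a measure"
    and F :: "nat \<Rightarrow> 'a measure"
    and f :: "'v::euclidean_space \<Rightarrow> real"
    and grad :: "'v \<Rightarrow> 'v"
    and L B \<sigma> \<alpha> :: real
    and p T :: nat
    and I :: "nat \<Rightarrow> nat set"
    and x :: "nat \<Rightarrow> 'a \<Rightarrow> 'v"
    and v G :: "nat \<Rightarrow> nat \<Rightarrow> 'a \<Rightarrow> 'v"
    and x0 :: 'v
  assumes prob: "prob_space M"
    and filt_sub: "\<And>t. subalgebra M (F t)"
    and filt_mono: "\<And>s t. s \<le> t \<Longrightarrow> sets (F s) \<subseteq> sets (F t)"
    and grad_f: "\<And>y. (f has_derivative (\<lambda>h. grad y \<bullet> h)) (at y)"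
    and L_pos: "L > 0"
    and lipschitz: "\<And>y z. norm (grad y - grad z) \<le> L * norm (y - z)"
    and bdd: "bdd_below (range f)"
    and p_pos: "p \<ge> 1"
    and I_sub: "\<And>t. I t \<subseteq> {1..p}"
    and I_card: "\<And>t. real p / 2 \<le> real (card (I t))"
    and x_0: "\<And>\<omega>. x 0 \<omega> = x0"
    and x_meas: "\<And>t. x t \<in> borel_measurable (F t)"
    and v_meas: "\<And>t i. i \<in> I t \<Longrightarrow> v t i \<in> borel_measurable (F t)"
    and G_meas: "\<And>t i. i \<in> I t \<Longrightarrow> G t i \<in> borel_measurable (F (Suc t))"
    and G_indep: "\<And>t. cond_indep_vars M (F t) (G t) (I t)"
    and G_int: "\<And>t i. i \<in> I t \<Longrightarrow> integrable M (G t i)"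
    and G_unbiased: "\<And>t i b. i \<in> I t \<Longrightarrow> b \<in> Basis \<Longrightarrow>
        AE \<omega> in M. real_cond_exp M (F t) (\<lambda>\<omega>. G t i \<omega> \<bullet> b) \<omega> = grad (v t i \<omega>) \<bullet> b"
    and G_var: "\<And>t i. i \<in> I t \<Longrightarrow>
        AE \<omega> in M. nn_cond_exp M (F t) (\<lambda>\<omega>. ennreal ((norm (G t i \<omega> - grad (v t i \<omega>)))\<^sup>2)) \<omega>
          \<le> ennreal (\<sigma>\<^sup>2)"
    and alpha_def: "\<alpha> = sqrt (real p) / sqrt (real T)"
    and T_large: "real T \<ge> 64 * L\<^sup>2 * real p"
    and update: "\<And>t \<omega>. \<omega> \<in> space M \<Longrightarrow>
        x (Suc t) \<omega> = x t \<omega> - (\<alpha> / real p) *\<^sub>R (\<Sum>i\<in>I t. G t i \<omega>)"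
    and B_pos: "B > 0"
    and elastic: "\<And>t i. i \<in> I t \<Longrightarrow>
        (\<integral>\<^sup>+ \<omega>. ennreal ((norm (x t \<omega> - v t i \<omega>))\<^sup>2) \<partial>M) \<le> ennreal (\<alpha>\<^sup>2 * B\<^sup>2)"
  shows "(MIN t\<in>{0..<T}. \<integral>\<^sup>+ \<omega>. ennreal ((norm (grad (x t \<omega>)))\<^sup>2) \<partial>M)
     \<le> ennreal (8 * (f x0 - Inf (range f)) / sqrt (real T * real p)
              + 4 * B\<^sup>2 * L\<^sup>2 * real p / real T
              + 8 * L * \<sigma>\<^sup>2 / sqrt (real T * real p)
              + 16 * L^3 * B\<^sup>2 * real p * sqrt (real p) / (real T * sqrt (real T)))"
  proof -
  interpret S: sgd M F f grad L B \<sigma> \<alpha> p T I x v G x0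
    by (rule sgd.intro) (fact assms)+
  show ?thesis by (rule S.main)
qed

end
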